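(* Let $G$ be an additive group, let $X$ be a complete non-Archimedean normed space over a field $K$ with a non-trivial non-Archimedean valuation $|\cdot|$, and let $k$ be a fixed integer with $k\neq 0,\pm1$. For $f:G\to X$ put $$Df(x,y)=f(x+ky)+f(x-ky)-k^2f(x+y)-k^2f(x-y)-2(1-k^2)f(x).$$ Let $\varphi:G\times G\to[0,\infty)$, and for $u\in G$ write $$\Phi(u)=\max\{|2(k^2-1)|\varphi(u,u),\ |k^2|\varphi(2u,u),\ \varphi(u,2u),\ \varphi((k+1)u,u),\ \varphi((k-1)u,u),\ \varphi(u,u),\ |k^2|\varphi(2u,2u),\ |2(k^2-1)|\varphi(u,2u),\ \varphi(u,3u),\ \varphi((2k+1)u,u),\ \varphi((2k-1)u,u)\}.$$ Suppose that $$\lim_{n\to\infty}\frac{1}{|2^n|}\max\{\varphi(2^{n+1}x,2^{n+1}y),\ |8|\varphi(2^nx,2^ny)\}=0,\qquad \lim_{n\to\infty}\frac{1}{|2^nk^2(k^2-1)|}\Phi(2^{n-1}x)=0$$ for all $x,y\in G$, and that for each $x\in G$ the limit $$\tilde{\varphi}_A(x):=\lim_{n\to\infty}\max\Big\{\frac{1}{|2^i|}\Phi(2^{i-1}x):\ 0\le i<n\Big\}$$ exists. Suppose that $f:G\to X$ is an odd function satisfying $\|Df(x,y)\|\le\varphi(x,y)$ for all $x,y\in G$. Then there exists an additive function $A:G\to X$ such that $$\|f(2x)-8f(x)-A(x)\|\le\frac{1}{|2k^2(k^2-1)|}\tilde{\varphi}_A(x)\qquad(x\in G).$$ Moreover,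 if $$\lim_{i\to\infty}\lim_{n\to\infty}\max\Big\{\frac{1}{|2^j|}\Phi(2^{j-1}x):\ i\le j<n+i\Big\}=0,$$ then $A$ is the unique additive function satisfying this inequality.
   Context: A non-Archimedean norm satisfies $\|x\|=0\iff x=0$, $\|rx\|=|r|\|x\|$ and $\|x+y\|\le\max\{\|x\|,\|y\|\}$. In the proof, $g(x)=f(2x)-8f(x)$ and $A(x)=\lim_{n\to\infty}g(2^nx)/2^n$. *)

theory Defs
  imports Complex_Main
begin

definition gmul :: "int \<Rightarrow> 'g::ab_group_add \<Rightarrow> 'g" where
  "gmul n x = (if 0 \<le> n then (\<Sum>_<nat n. x) else - (\<Sum>_<nat (- n). x))"

definition nonarch_valuation :: "('k::field \<Rightarrow> real) \<Rightarrow> bool" where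
  "nonarch_valuation v \<longleftrightarrow>
     (\<forall>r. 0 \<le> v r) \<and> (\<forall>r. v r = 0 \<longleftrightarrow> r = 0) \<and>
     (\<forall>r s. v (r * s) = v r * v s) \<and>
     (\<forall>r s. v (r + s) \<le> max (v r) (v s))"

definition nontrivial_valuation :: "('k::field \<Rightarrow> real) \<Rightarrow> bool" where
  "nontrivial_valuation v \<longleftrightarrow> (\<exists>r. v r \<noteq> 0 \<and> v r \<noteq> 1)"

definition nonarch_norm ::
  "('k::field \<Rightarrow> real) \<Rightarrow> ('k \<Rightarrow> 'x::ab_group_add \<Rightarrow> 'x) \<Rightarrow> ('x \<Rightarrow> real) \<Rightarrow> bool" where
  "nonarch_norm v smul nrm \<longleftrightarrow>
     (\<forall>x. nrm x = 0 \<longleftrightarrow> x = 0) \<and>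
     (\<forall>r x. nrm (smul r x) = v r * nrm x) \<and>
     (\<forall>x y. nrm (x + y) \<le> max (nrm x) (nrm y))"

definition norm_complete :: "('x::ab_group_add \<Rightarrow> real) \<Rightarrow> bool" where
  "norm_complete nrm \<longleftrightarrow>
     (\<forall>s::nat \<Rightarrow> 'x. (\<forall>e>0. \<exists>N. \<forall>m\<ge>N. \<forall>n\<ge>N. nrm (s m - s n) < e) \<longrightarrow>
        (\<exists>l. (\<lambda>n. nrm (s n - l)) \<longlonglongrightarrow> 0))"

definition Dop ::
  "('k::field \<Rightarrow> 'x::ab_group_add \<Rightarrow> 'x) \<Rightarrow> int \<Rightarrow> ('g::ab_group_add \<Rightarrow> 'x) \<Rightarrow> 'g \<Rightarrow> 'g \<Rightarrow> 'x" where
  "Dop smul k f x y =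
     f (x + gmul k y) + f (x - gmul k y)
     - smul (of_int (k^2)) (f (x + y)) - smul (of_int (k^2)) (f (x - y))
     - smul (of_int (2 * (1 - k^2))) (f x)"

definition Phi ::
  "('k::field \<Rightarrow> real) \<Rightarrow> int \<Rightarrow> ('g::ab_group_add \<Rightarrow> 'g \<Rightarrow> real) \<Rightarrow> 'g \<Rightarrow> real" where
  "Phi v k \<phi> u = Max
     { v (of_int (2 * (k^2 - 1))) * \<phi> u u,
       v (of_int (k^2)) * \<phi> (gmul 2 u) u,
       \<phi> u (gmul 2 u),
       \<phi> (gmul (k + 1) u) u,
       \<phi> (gmul (k - 1) u) u,
       \<phi> u u,
       v (of_int (k^2)) * \<phi> (gmul 2 u) (gmul 2 u),
       v (of_int (2 * (k^2 - 1))) * \<phi> u (gmul 2 u),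
       \<phi> u (gmul 3 u),
       \<phi> (gmul (2 * k + 1) u) u,
       \<phi> (gmul (2 * k - 1) u) u }"

text \<open>The term \<Phi>(2^(i-1) x) / |2^i|  (for i = 0 the natural-number subtraction
  gives 2^0 = 1).\<close>
definition Phi_term ::
  "('k::field \<Rightarrow> real) \<Rightarrow> int \<Rightarrow> ('g::ab_group_add \<Rightarrow> 'g \<Rightarrow> real) \<Rightarrow> 'g \<Rightarrow> nat \<Rightarrow> real" where
  "Phi_term v k \<phi> x i = Phi v k \<phi> (gmul (2 ^ (i - 1)) x) / v ((2::'k) ^ i)"

definition additive_map :: "('g::ab_group_add \<Rightarrow> 'x::ab_group_add) \<Rightarrow> bool" where
  "additive_map A \<longleftrightarrow> (\<forall>x y. A (x + y) = A x + A y)"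

end

theory Submission
  imports Defs
begin


lemma gmul_nat: "gmul (int n) x = (\<Sum>_<n. x)" by (simp add: gmul_def)
lemma gmul_negnat: "gmul (- int n) x = - (\<Sum>_<n. x)" by (cases "n = 0") (simp_all add: gmul_def)

lemma gmul_succ: "gmul (n + 1) x = gmul n x + x"
proof (cases "0 \<le> n")
  case True
  then obtain m where m: "n = int m" by (metis nonneg_int_cases)
  have "n + 1 = int (Suc m)" using m by simp
  then show ?thesis using m by (simp only: gmul_nat) (simp add: add.commute)
next
  case False
  define m where "m = nat (- n - 1)"
  have m: "n = - int (Suc m)" using False by (simp add: m_def)
  have "n + 1 = - int m" using m by simp
  then show ?thesis using m by (simp only: gmul_negnat) (simp add: add.commute)
qed

lemma gmul_add: "gmul (m + n) x = gmul m x + gmul n x"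
proof (induction n rule: int_induct[where k=0])
  case base then show ?case by (simp add: gmul_def)
next
  case (step1 i) then show ?case using gmul_succ[of "m+i" x] gmul_succ[of i x] by (simp add: add.assoc)
next
  case (step2 i)
  have "gmul (m + (i - 1) + 1) x = gmul (m + (i-1)) x + x" by (rule gmul_succ)
  moreover have "gmul (i - 1 + 1) x = gmul (i-1) x + x" by (rule gmul_succ)
  ultimately show ?case using step2 by (simp add: algebra_simps)
qed

lemma gmul_0[simp]: "gmul 0 x = 0" by (simp add: gmul_def)
lemma gmul_1[simp]: "gmul 1 x = x" by (simp add: gmul_def)
lemma gmul_minus: "gmul (- n) x = - gmul n x"
proof -
  have "gmul n x + gmul (-n) x = 0" using gmul_add[of n "-n" x] by simp
  then show ?thesis by (metis add.inverse_unique)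
qed
lemma gmul_diff: "gmul (m - n) x = gmul m x - gmul n x"
  using gmul_add[of m "-n" x] by (simp add: gmul_minus)
lemma gmul_zero_right[simp]: "gmul n (0::'a::ab_group_add) = 0" by (simp add: gmul_def)
lemma gmul_add_right: "gmul n (x + y) = gmul n x + gmul n y"
  by (simp add: gmul_def sum.distrib)
lemma gmul_minus_right: "gmul n (- x) = - gmul n x"
proof -
  have "gmul n x + gmul n (-x) = 0" using gmul_add_right[of n x "-x"] by simp
  then show ?thesis by (metis add.inverse_unique)
qed
lemma gmul_diff_right: "gmul n (x - y) = gmul n x - gmul n y"
  using gmul_add_right[of n x "-y"] by (simp add: gmul_minus_right)
lemma gmul_mult: "gmul (m * n) x = gmul m (gmul n x)"
proof (induction m rule: int_induct[where k=0])
  case base then show ?case by simp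
next
  case (step1 i) then show ?case by (simp add: distrib_right gmul_add gmul_succ)
next
  case (step2 i)
  have "gmul ((i - 1) * n) x = gmul (i*n) x - gmul n x" by (simp add: left_diff_distrib gmul_diff)
  moreover have "gmul (i - 1) (gmul n x) = gmul i (gmul n x) - gmul n x" by (simp add: gmul_diff)
  ultimately show ?case using step2 by simp
qed




definition pt :: "'g::ab_group_add \<Rightarrow> 'g \<Rightarrow> int \<Rightarrow> int \<Rightarrow> 'g" where
  "pt x y a b = gmul a x + gmul b y"

lemma pt_add: "pt x y a b + pt x y c d = pt x y (a + c) (b + d)"
  by (simp add: pt_def gmul_add algebra_simps)
lemma pt_diff: "pt x y a b - pt x y c d = pt x y (a - c) (b - d)"
  by (simp add: pt_def gmul_diff algebra_simps)
lemma pt_gmul: "gmul m (pt x y a b) = pt x y (m * a) (m * b)"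
  by (simp add: pt_def gmul_add_right gmul_mult)
lemma pt_minus: "- pt x y a b = pt x y (- a) (- b)"
  by (simp add: pt_def gmul_minus)
lemma pt_1d: "pt u 0 a b = gmul a u" by (simp add: pt_def)

lemma DopP: "Dop smul k A (pt x y a b) (pt x y c d) =
   A (pt x y (a + k * c) (b + k * d)) + A (pt x y (a - k * c) (b - k * d))
   - smul (of_int (k^2)) (A (pt x y (a + c) (b + d))) - smul (of_int (k^2)) (A (pt x y (a - c) (b - d)))
   - smul (of_int (2 * (1 - k^2))) (A (pt x y a b))"
  by (simp add: Dop_def pt_gmul pt_add pt_diff)

lemma Peq: "a = c \<Longrightarrow> b = d \<Longrightarrow> A (pt x y a b) = A (pt x y c d)" by simp
lemma Pneg: "\<forall>z. A (- z) = - A z \<Longrightarrow> a = - c \<Longrightarrow> b = - d \<Longrightarrow> A (pt x y a b) = - A (pt x y c d)"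
  by (metis pt_minus)
lemma Pzero: "A 0 = 0 \<Longrightarrow> a = 0 \<Longrightarrow> b = 0 \<Longrightarrow> A (pt x y a b) = 0"
  by (simp add: pt_def)

definition lc :: "('k::field \<Rightarrow> 'x::ab_group_add \<Rightarrow> 'x) \<Rightarrow> (nat \<Rightarrow> 'x) \<Rightarrow> nat \<Rightarrow> (nat \<Rightarrow> int) \<Rightarrow> 'x" where
  "lc sm w N c = (\<Sum>j<N. sm (of_int (c j)) (w j))"

context vector_space begin

lemma lc_add: "lc scale w N c + lc scale w N d = lc scale w N (\<lambda>j. c j + d j)"
  by (simp add: lc_def scale_left_distrib sum.distrib)
lemma lc_minus: "- lc scale w N c = lc scale w N (\<lambda>j. - c j)"
  by (simp add: lc_def sum_negf[symmetric])
lemma lc_diff: "lc scale w N c - lc scale w N d = lc scale w N (\<lambda>j. c j - d j)"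
  by (simp add: lc_def scale_left_diff_distrib sum_subtractf)
lemma lc_scale: "scale (of_int m) (lc scale w N c) = lc scale w N (\<lambda>j. m * c j)"
  by (simp add: lc_def scale_sum_right)
lemma lc_atom: "j < N \<Longrightarrow> w j = lc scale w N (\<lambda>i. if i = j then 1 else 0)"
proof -
  assume j: "j < N"
  have "lc scale w N (\<lambda>i. if i = j then 1 else 0) = (\<Sum>i<N. if i = j then w i else 0)"
    unfolding lc_def by (rule sum.cong) auto
  also have "\<dots> = w j" using j by simp
  finally show ?thesis by simp
qed
lemma lc_cong: "(\<And>j. j < N \<Longrightarrow> c j = d j) \<Longrightarrow> lc scale w N c = lc scale w N d"
  by (simp add: lc_def)

end

lemma all_less_Suc': "(\<forall>j<Suc n. P j) = (P n \<and> (\<forall>j<n. P j))"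
  using less_Suc_eq by auto




context vector_space begin

lemma less_cases_16: "(j::nat) < 16 \<Longrightarrow> j = 0 \<or> j = 1 \<or> j = 2 \<or> j = 3 \<or> j = 4 \<or> j = 5 \<or> j = 6 \<or> j = 7 \<or> j = 8 \<or> j = 9 \<or> j = 10 \<or> j = 11 \<or> j = 12 \<or> j = 13 \<or> j = 14 \<or> j = 15" by arith

lemma id1d:
  assumes odd: "\<forall>z. A (- z) = - A z" and A0: "A 0 = 0"
  shows "scale (of_int (k^2*(k^2-1))) (scale (of_int (1)) (A (pt x y (4) (0))) + scale (of_int (-10)) (A (pt x y (2) (0))) + scale (of_int (16)) (A (pt x y (1) (0)))) =
    scale (of_int (4*k^2-3)) (Dop scale k A (pt x y (1) (0)) (pt x y (1) (0)))
    + scale (of_int (2*k^2)) (Dop scale k A (pt x y (1) (0)) (pt x y (2) (0)))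
    + scale (of_int (-2*k^2)) (Dop scale k A (pt x y (2) (0)) (pt x y (1) (0)))
    + scale (of_int (-(k^2))) (Dop scale k A (pt x y (2) (0)) (pt x y (2) (0)))
    + scale (of_int (-2)) (Dop scale k A (pt x y (1 + 1 * k) (0)) (pt x y (1) (0)))
    + scale (of_int (2)) (Dop scale k A (pt x y (-1 + 1 * k) (0)) (pt x y (1) (0)))
    + scale (of_int (1)) (Dop scale k A (pt x y (1) (0)) (pt x y (3) (0)))
    + scale (of_int (-1)) (Dop scale k A (pt x y (1 + 2 * k) (0)) (pt x y (1) (0)))
    + scale (of_int (1)) (Dop scale k A (pt x y (-1 + 2 * k) (0)) (pt x y (1) (0)))"
proof -
  have e1: "A (pt x y ((1) + k * (1)) ((0) + k * (0))) = A (pt x y (1 + 1 * k) (0))" by (rule Peq[where A=A]) (simp_all add: algebra_simps)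
  have e2: "A (pt x y ((1) - k * (1)) ((0) - k * (0))) = A (pt x y (1 + -1 * k) (0))" by (rule Peq[where A=A]) (simp_all add: algebra_simps)
  have e3: "A (pt x y ((1) + (1)) ((0) + (0))) = A (pt x y (2) (0))" by (rule Peq[where A=A]) (simp_all add: algebra_simps)
  have e4: "A (pt x y ((1) - (1)) ((0) - (0))) = 0" by (rule Pzero[where A=A, OF A0]) (simp_all add: algebra_simps)
  have d0: "Dop scale k A (pt x y (1) (0)) (pt x y (1) (0)) = A (pt x y (1 + 1 * k) (0)) + A (pt x y (1 + -1 * k) (0)) - scale (of_int (k^2)) (A (pt x y (2) (0))) - scale (of_int (k^2)) (0) - scale (of_int (2 * (1 - k^2))) (A (pt x y (1) (0)))" by (simp only: DopP e1 e2 e3 e4)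
  have e5: "A (pt x y ((1) + k * (2)) ((0) + k * (0))) = A (pt x y (1 + 2 * k) (0))" by (rule Peq[where A=A]) (simp_all add: algebra_simps)
  have e6: "A (pt x y ((1) - k * (2)) ((0) - k * (0))) = A (pt x y (1 + -2 * k) (0))" by (rule Peq[where A=A]) (simp_all add: algebra_simps)
  have e7: "A (pt x y ((1) + (2)) ((0) + (0))) = A (pt x y (3) (0))" by (rule Peq[where A=A]) (simp_all add: algebra_simps)
  have e8: "A (pt x y ((1) - (2)) ((0) - (0))) = - A (pt x y (1) (0))" by (rule Pneg[where A=A, OF odd]) (simp_all add: algebra_simps)
  have d1: "Dop scale k A (pt x y (1) (0)) (pt x y (2) (0)) = A (pt x y (1 + 2 * k) (0)) + A (pt x y (1 + -2 * k) (0)) - scale (of_int (k^2)) (A (pt x y (3) (0))) - scale (of_int (k^2)) ((- A (pt x y (1) (0)))) - scale (of_int (2 * (1 - k^2))) (A (pt x y (1) (0)))" by (simp only: DopP e5 e6 e7 e8)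
  have e9: "A (pt x y ((2) + k * (1)) ((0) + k * (0))) = A (pt x y (2 + 1 * k) (0))" by (rule Peq[where A=A]) (simp_all add: algebra_simps)
  have e10: "A (pt x y ((2) - k * (1)) ((0) - k * (0))) = A (pt x y (2 + -1 * k) (0))" by (rule Peq[where A=A]) (simp_all add: algebra_simps)
  have e11: "A (pt x y ((2) + (1)) ((0) + (0))) = A (pt x y (3) (0))" by (rule Peq[where A=A]) (simp_all add: algebra_simps)
  have e12: "A (pt x y ((2) - (1)) ((0) - (0))) = A (pt x y (1) (0))" by (rule Peq[where A=A]) (simp_all add: algebra_simps)
  have d2: "Dop scale k A (pt x y (2) (0)) (pt x y (1) (0)) = A (pt x y (2 + 1 * k) (0)) + A (pt x y (2 + -1 * k) (0)) - scale (of_int (k^2)) (A (pt x y (3) (0))) - scale (of_int (k^2)) (A (pt x y (1) (0))) - scale (of_int (2 * (1 - k^2))) (A (pt x y (2) (0)))" by (simp only: DopP e9 e10 e11 e12)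
  have e13: "A (pt x y ((2) + k * (2)) ((0) + k * (0))) = A (pt x y (2 + 2 * k) (0))" by (rule Peq[where A=A]) (simp_all add: algebra_simps)
  have e14: "A (pt x y ((2) - k * (2)) ((0) - k * (0))) = A (pt x y (2 + -2 * k) (0))" by (rule Peq[where A=A]) (simp_all add: algebra_simps)
  have e15: "A (pt x y ((2) + (2)) ((0) + (0))) = A (pt x y (4) (0))" by (rule Peq[where A=A]) (simp_all add: algebra_simps)
  have e16: "A (pt x y ((2) - (2)) ((0) - (0))) = 0" by (rule Pzero[where A=A, OF A0]) (simp_all add: algebra_simps)
  have d3: "Dop scale k A (pt x y (2) (0)) (pt x y (2) (0)) = A (pt x y (2 + 2 * k) (0)) + A (pt x y (2 + -2 * k) (0)) - scale (of_int (k^2)) (A (pt x y (4) (0))) - scale (of_int (k^2)) (0) - scale (of_int (2 * (1 - k^2))) (A (pt x y (2) (0)))" by (simp only: DopP e13 e14 e15 e16)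
  have e17: "A (pt x y ((1 + 1 * k) + k * (1)) ((0) + k * (0))) = A (pt x y (1 + 2 * k) (0))" by (rule Peq[where A=A]) (simp_all add: algebra_simps)
  have e18: "A (pt x y ((1 + 1 * k) - k * (1)) ((0) - k * (0))) = A (pt x y (1) (0))" by (rule Peq[where A=A]) (simp_all add: algebra_simps)
  have e19: "A (pt x y ((1 + 1 * k) + (1)) ((0) + (0))) = A (pt x y (2 + 1 * k) (0))" by (rule Peq[where A=A]) (simp_all add: algebra_simps)
  have e20: "A (pt x y ((1 + 1 * k) - (1)) ((0) - (0))) = A (pt x y (1 * k) (0))" by (rule Peq[where A=A]) (simp_all add: algebra_simps)
  have d4: "Dop scale k A (pt x y (1 + 1 * k) (0)) (pt x y (1) (0)) = A (pt x y (1 + 2 * k) (0)) + A (pt x y (1) (0)) - scale (of_int (k^2)) (A (pt x y (2 + 1 * k) (0))) - scale (of_int (k^2)) (A (pt x y (1 * k) (0))) - scale (of_int (2 * (1 - k^2))) (A (pt x y (1 + 1 * k) (0)))" by (simp only: DopP e17 e18 e19 e20)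
  have e21: "A (pt x y ((-1 + 1 * k) + k * (1)) ((0) + k * (0))) = - A (pt x y (1 + -2 * k) (0))" by (rule Pneg[where A=A, OF odd]) (simp_all add: algebra_simps)
  have e22: "A (pt x y ((-1 + 1 * k) - k * (1)) ((0) - k * (0))) = - A (pt x y (1) (0))" by (rule Pneg[where A=A, OF odd]) (simp_all add: algebra_simps)
  have e23: "A (pt x y ((-1 + 1 * k) + (1)) ((0) + (0))) = A (pt x y (1 * k) (0))" by (rule Peq[where A=A]) (simp_all add: algebra_simps)
  have e24: "A (pt x y ((-1 + 1 * k) - (1)) ((0) - (0))) = - A (pt x y (2 + -1 * k) (0))" by (rule Pneg[where A=A, OF odd]) (simp_all add: algebra_simps)
  have e25: "A (pt x y (-1 + 1 * k) (0)) = - A (pt x y (1 + -1 * k) (0))" by (rule Pneg[where A=A, OF odd]) (simp_all add: algebra_simps)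
  have d5: "Dop scale k A (pt x y (-1 + 1 * k) (0)) (pt x y (1) (0)) = (- A (pt x y (1 + -2 * k) (0))) + (- A (pt x y (1) (0))) - scale (of_int (k^2)) (A (pt x y (1 * k) (0))) - scale (of_int (k^2)) ((- A (pt x y (2 + -1 * k) (0)))) - scale (of_int (2 * (1 - k^2))) ((- A (pt x y (1 + -1 * k) (0))))" by (simp only: DopP e21 e22 e23 e24 e25)
  have e26: "A (pt x y ((1) + k * (3)) ((0) + k * (0))) = A (pt x y (1 + 3 * k) (0))" by (rule Peq[where A=A]) (simp_all add: algebra_simps)
  have e27: "A (pt x y ((1) - k * (3)) ((0) - k * (0))) = A (pt x y (1 + -3 * k) (0))" by (rule Peq[where A=A]) (simp_all add: algebra_simps)
  have e28: "A (pt x y ((1) + (3)) ((0) + (0))) = A (pt x y (4) (0))" by (rule Peq[where A=A]) (simp_all add: algebra_simps)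
  have e29: "A (pt x y ((1) - (3)) ((0) - (0))) = - A (pt x y (2) (0))" by (rule Pneg[where A=A, OF odd]) (simp_all add: algebra_simps)
  have d6: "Dop scale k A (pt x y (1) (0)) (pt x y (3) (0)) = A (pt x y (1 + 3 * k) (0)) + A (pt x y (1 + -3 * k) (0)) - scale (of_int (k^2)) (A (pt x y (4) (0))) - scale (of_int (k^2)) ((- A (pt x y (2) (0)))) - scale (of_int (2 * (1 - k^2))) (A (pt x y (1) (0)))" by (simp only: DopP e26 e27 e28 e29)
  have e30: "A (pt x y ((1 + 2 * k) + k * (1)) ((0) + k * (0))) = A (pt x y (1 + 3 * k) (0))" by (rule Peq[where A=A]) (simp_all add: algebra_simps)
  have e31: "A (pt x y ((1 + 2 * k) - k * (1)) ((0) - k * (0))) = A (pt x y (1 + 1 * k) (0))" by (rule Peq[where A=A]) (simp_all add: algebra_simps)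
  have e32: "A (pt x y ((1 + 2 * k) + (1)) ((0) + (0))) = A (pt x y (2 + 2 * k) (0))" by (rule Peq[where A=A]) (simp_all add: algebra_simps)
  have e33: "A (pt x y ((1 + 2 * k) - (1)) ((0) - (0))) = A (pt x y (2 * k) (0))" by (rule Peq[where A=A]) (simp_all add: algebra_simps)
  have d7: "Dop scale k A (pt x y (1 + 2 * k) (0)) (pt x y (1) (0)) = A (pt x y (1 + 3 * k) (0)) + A (pt x y (1 + 1 * k) (0)) - scale (of_int (k^2)) (A (pt x y (2 + 2 * k) (0))) - scale (of_int (k^2)) (A (pt x y (2 * k) (0))) - scale (of_int (2 * (1 - k^2))) (A (pt x y (1 + 2 * k) (0)))" by (simp only: DopP e30 e31 e32 e33)
  have e34: "A (pt x y ((-1 + 2 * k) + k * (1)) ((0) + k * (0))) = - A (pt x y (1 + -3 * k) (0))" by (rule Pneg[where A=A, OF odd]) (simp_all add: algebra_simps)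
  have e35: "A (pt x y ((-1 + 2 * k) - k * (1)) ((0) - k * (0))) = - A (pt x y (1 + -1 * k) (0))" by (rule Pneg[where A=A, OF odd]) (simp_all add: algebra_simps)
  have e36: "A (pt x y ((-1 + 2 * k) + (1)) ((0) + (0))) = A (pt x y (2 * k) (0))" by (rule Peq[where A=A]) (simp_all add: algebra_simps)
  have e37: "A (pt x y ((-1 + 2 * k) - (1)) ((0) - (0))) = - A (pt x y (2 + -2 * k) (0))" by (rule Pneg[where A=A, OF odd]) (simp_all add: algebra_simps)
  have e38: "A (pt x y (-1 + 2 * k) (0)) = - A (pt x y (1 + -2 * k) (0))" by (rule Pneg[where A=A, OF odd]) (simp_all add: algebra_simps)
  have d8: "Dop scale k A (pt x y (-1 + 2 * k) (0)) (pt x y (1) (0)) = (- A (pt x y (1 + -3 * k) (0))) + (- A (pt x y (1 + -1 * k) (0))) - scale (of_int (k^2)) (A (pt x y (2 * k) (0))) - scale (of_int (k^2)) ((- A (pt x y (2 + -2 * k) (0)))) - scale (of_int (2 * (1 - k^2))) ((- A (pt x y (1 + -2 * k) (0))))" by (simp only: DopP e34 e35 e36 e37 e38)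
  define w where "w = (\<lambda>j. ([A (pt x y (1 + 1 * k) (0)), A (pt x y (1 + -1 * k) (0)), A (pt x y (2) (0)), A (pt x y (1) (0)), A (pt x y (1 + 2 * k) (0)), A (pt x y (1 + -2 * k) (0)), A (pt x y (3) (0)), A (pt x y (2 + 1 * k) (0)), A (pt x y (2 + -1 * k) (0)), A (pt x y (2 + 2 * k) (0)), A (pt x y (2 + -2 * k) (0)), A (pt x y (4) (0)), A (pt x y (1 * k) (0)), A (pt x y (1 + 3 * k) (0)), A (pt x y (1 + -3 * k) (0)), A (pt x y (2 * k) (0))]) ! j)"
  have at0: "A (pt x y (1 + 1 * k) (0)) = lc scale w 16 (\<lambda>i. if i = 0 then 1 else 0)" by (simp add: lc_atom[symmetric] w_def)
  have at1: "A (pt x y (1 + -1 * k) (0)) = lc scale w 16 (\<lambda>i. if i = 1 then 1 else 0)" by (simp add: lc_atom[symmetric] w_def)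
  have at2: "A (pt x y (2) (0)) = lc scale w 16 (\<lambda>i. if i = 2 then 1 else 0)" by (simp add: lc_atom[symmetric] w_def)
  have at3: "A (pt x y (1) (0)) = lc scale w 16 (\<lambda>i. if i = 3 then 1 else 0)" by (simp add: lc_atom[symmetric] w_def)
  have at4: "A (pt x y (1 + 2 * k) (0)) = lc scale w 16 (\<lambda>i. if i = 4 then 1 else 0)" by (simp add: lc_atom[symmetric] w_def)
  have at5: "A (pt x y (1 + -2 * k) (0)) = lc scale w 16 (\<lambda>i. if i = 5 then 1 else 0)" by (simp add: lc_atom[symmetric] w_def)
  have at6: "A (pt x y (3) (0)) = lc scale w 16 (\<lambda>i. if i = 6 then 1 else 0)" by (simp add: lc_atom[symmetric] w_def)
  have at7: "A (pt x y (2 + 1 * k) (0)) = lc scale w 16 (\<lambda>i. if i = 7 then 1 else 0)" by (simp add: lc_atom[symmetric] w_def)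
  have at8: "A (pt x y (2 + -1 * k) (0)) = lc scale w 16 (\<lambda>i. if i = 8 then 1 else 0)" by (simp add: lc_atom[symmetric] w_def)
  have at9: "A (pt x y (2 + 2 * k) (0)) = lc scale w 16 (\<lambda>i. if i = 9 then 1 else 0)" by (simp add: lc_atom[symmetric] w_def)
  have at10: "A (pt x y (2 + -2 * k) (0)) = lc scale w 16 (\<lambda>i. if i = 10 then 1 else 0)" by (simp add: lc_atom[symmetric] w_def)
  have at11: "A (pt x y (4) (0)) = lc scale w 16 (\<lambda>i. if i = 11 then 1 else 0)" by (simp add: lc_atom[symmetric] w_def)
  have at12: "A (pt x y (1 * k) (0)) = lc scale w 16 (\<lambda>i. if i = 12 then 1 else 0)" by (simp add: lc_atom[symmetric] w_def)
  have at13: "A (pt x y (1 + 3 * k) (0)) = lc scale w 16 (\<lambda>i. if i = 13 then 1 else 0)" by (simp add: lc_atom[symmetric] w_def)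
  have at14: "A (pt x y (1 + -3 * k) (0)) = lc scale w 16 (\<lambda>i. if i = 14 then 1 else 0)" by (simp add: lc_atom[symmetric] w_def)
  have at15: "A (pt x y (2 * k) (0)) = lc scale w 16 (\<lambda>i. if i = 15 then 1 else 0)" by (simp add: lc_atom[symmetric] w_def)
  show ?thesis
    unfolding d0 d1 d2 d3 d4 d5 d6 d7 d8
    unfolding at0 at1 at2 at3 at4 at5 at6 at7 at8 at9 at10 at11 at12 at13 at14 at15
    apply (simp only: scale_zero_right diff_0_right add_0_right diff_0 add_0)?
    apply (simp only: lc_add lc_diff lc_minus lc_scale)
    apply (rule lc_cong)
    apply (drule less_cases_16)
    apply (elim disjE; hypsubst; simp; algebra)
    done
qed

lemma less_cases_24: "(j::nat) < 24 \<Longrightarrow> j = 0 \<or> j = 1 \<or> j = 2 \<or> j = 3 \<or> j = 4 \<or> j = 5 \<or> j = 6 \<or> j = 7 \<or> j = 8 \<or> j = 9 \<or> j = 10 \<or> j = 11 \<or> j = 12 \<or> j = 13 \<or> j = 14 \<or> j = 15 \<or> j = 16 \<or> j = 17 \<or> j = 18 \<or> j = 19 \<or> j = 20 \<or> j = 21 \<or> j = 22 \<or> j = 23" by arith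

lemma id2d:
  assumes odd: "\<forall>z. A (- z) = - A z" and A0: "A 0 = 0"
  shows "scale (of_int (6*k^2*(k^2-1))) (scale (of_int (1)) (A (pt x y (1) (1))) + scale (of_int (1)) (A (pt x y (1) (-1))) + scale (of_int (-2)) (A (pt x y (1) (0)))) =
    scale (of_int (4)) (Dop scale k A (pt x y (1) (-1 * k)) (pt x y (1) (0)))
    + scale (of_int (6-8*k^2)) (Dop scale k A (pt x y (1) (0)) (pt x y (0) (1)))
    + scale (of_int (-4)) (Dop scale k A (pt x y (1) (0)) (pt x y (1) (1)))
    + scale (of_int (-4)) (Dop scale k A (pt x y (1) (0)) (pt x y (1) (-1)))
    + scale (of_int (4)) (Dop scale k A (pt x y (1) (1 * k)) (pt x y (1) (0)))
    + scale (of_int (k^2)) (Dop scale k A (pt x y (2) (-1)) (pt x y (0) (1)))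
    + scale (of_int (1)) (Dop scale k A (pt x y (2) (-1 * k)) (pt x y (0) (1)))
    + scale (of_int (2*k^2+2)) (Dop scale k A (pt x y (2) (0)) (pt x y (0) (1)))
    + scale (of_int (1)) (Dop scale k A (pt x y (2) (1 * k)) (pt x y (0) (1)))
    + scale (of_int (k^2)) (Dop scale k A (pt x y (2) (1)) (pt x y (0) (1)))
    + scale (of_int (k^4)) (A (pt x y (2) (-2)) - scale (of_int 2) (A (pt x y (1) (-1))))
    + scale (of_int (-1)) (A (pt x y (2) (-2 * k)) - scale (of_int 2) (A (pt x y (1) (-1 * k))))
    + scale (of_int (-(2*k^4-2))) (A (pt x y (2) (0)) - scale (of_int 2) (A (pt x y (1) (0))))
    + scale (of_int (-1)) (A (pt x y (2) (2 * k)) - scale (of_int 2) (A (pt x y (1) (1 * k))))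
    + scale (of_int (k^4)) (A (pt x y (2) (2)) - scale (of_int 2) (A (pt x y (1) (1))))"
proof -
  have e1: "A (pt x y ((1) + k * (1)) ((-1 * k) + k * (0))) = A (pt x y (1 + 1 * k) (-1 * k))" by (rule Peq[where A=A]) (simp_all add: algebra_simps)
  have e2: "A (pt x y ((1) - k * (1)) ((-1 * k) - k * (0))) = A (pt x y (1 + -1 * k) (-1 * k))" by (rule Peq[where A=A]) (simp_all add: algebra_simps)
  have e3: "A (pt x y ((1) + (1)) ((-1 * k) + (0))) = A (pt x y (2) (-1 * k))" by (rule Peq[where A=A]) (simp_all add: algebra_simps)
  have e4: "A (pt x y ((1) - (1)) ((-1 * k) - (0))) = - A (pt x y (0) (1 * k))" by (rule Pneg[where A=A, OF odd]) (simp_all add: algebra_simps)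
  have d0: "Dop scale k A (pt x y (1) (-1 * k)) (pt x y (1) (0)) = A (pt x y (1 + 1 * k) (-1 * k)) + A (pt x y (1 + -1 * k) (-1 * k)) - scale (of_int (k^2)) (A (pt x y (2) (-1 * k))) - scale (of_int (k^2)) ((- A (pt x y (0) (1 * k)))) - scale (of_int (2 * (1 - k^2))) (A (pt x y (1) (-1 * k)))" by (simp only: DopP e1 e2 e3 e4)
  have e5: "A (pt x y ((1) + k * (0)) ((0) + k * (1))) = A (pt x y (1) (1 * k))" by (rule Peq[where A=A]) (simp_all add: algebra_simps)
  have e6: "A (pt x y ((1) - k * (0)) ((0) - k * (1))) = A (pt x y (1) (-1 * k))" by (rule Peq[where A=A]) (simp_all add: algebra_simps)
  have e7: "A (pt x y ((1) + (0)) ((0) + (1))) = A (pt x y (1) (1))" by (rule Peq[where A=A]) (simp_all add: algebra_simps)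
  have e8: "A (pt x y ((1) - (0)) ((0) - (1))) = A (pt x y (1) (-1))" by (rule Peq[where A=A]) (simp_all add: algebra_simps)
  have d1: "Dop scale k A (pt x y (1) (0)) (pt x y (0) (1)) = A (pt x y (1) (1 * k)) + A (pt x y (1) (-1 * k)) - scale (of_int (k^2)) (A (pt x y (1) (1))) - scale (of_int (k^2)) (A (pt x y (1) (-1))) - scale (of_int (2 * (1 - k^2))) (A (pt x y (1) (0)))" by (simp only: DopP e5 e6 e7 e8)
  have e9: "A (pt x y ((1) + k * (1)) ((0) + k * (1))) = A (pt x y (1 + 1 * k) (1 * k))" by (rule Peq[where A=A]) (simp_all add: algebra_simps)
  have e10: "A (pt x y ((1) - k * (1)) ((0) - k * (1))) = A (pt x y (1 + -1 * k) (-1 * k))" by (rule Peq[where A=A]) (simp_all add: algebra_simps)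
  have e11: "A (pt x y ((1) + (1)) ((0) + (1))) = A (pt x y (2) (1))" by (rule Peq[where A=A]) (simp_all add: algebra_simps)
  have e12: "A (pt x y ((1) - (1)) ((0) - (1))) = - A (pt x y (0) (1))" by (rule Pneg[where A=A, OF odd]) (simp_all add: algebra_simps)
  have d2: "Dop scale k A (pt x y (1) (0)) (pt x y (1) (1)) = A (pt x y (1 + 1 * k) (1 * k)) + A (pt x y (1 + -1 * k) (-1 * k)) - scale (of_int (k^2)) (A (pt x y (2) (1))) - scale (of_int (k^2)) ((- A (pt x y (0) (1)))) - scale (of_int (2 * (1 - k^2))) (A (pt x y (1) (0)))" by (simp only: DopP e9 e10 e11 e12)
  have e13: "A (pt x y ((1) + k * (1)) ((0) + k * (-1))) = A (pt x y (1 + 1 * k) (-1 * k))" by (rule Peq[where A=A]) (simp_all add: algebra_simps)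
  have e14: "A (pt x y ((1) - k * (1)) ((0) - k * (-1))) = A (pt x y (1 + -1 * k) (1 * k))" by (rule Peq[where A=A]) (simp_all add: algebra_simps)
  have e15: "A (pt x y ((1) + (1)) ((0) + (-1))) = A (pt x y (2) (-1))" by (rule Peq[where A=A]) (simp_all add: algebra_simps)
  have e16: "A (pt x y ((1) - (1)) ((0) - (-1))) = A (pt x y (0) (1))" by (rule Peq[where A=A]) (simp_all add: algebra_simps)
  have d3: "Dop scale k A (pt x y (1) (0)) (pt x y (1) (-1)) = A (pt x y (1 + 1 * k) (-1 * k)) + A (pt x y (1 + -1 * k) (1 * k)) - scale (of_int (k^2)) (A (pt x y (2) (-1))) - scale (of_int (k^2)) (A (pt x y (0) (1))) - scale (of_int (2 * (1 - k^2))) (A (pt x y (1) (0)))" by (simp only: DopP e13 e14 e15 e16)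
  have e17: "A (pt x y ((1) + k * (1)) ((1 * k) + k * (0))) = A (pt x y (1 + 1 * k) (1 * k))" by (rule Peq[where A=A]) (simp_all add: algebra_simps)
  have e18: "A (pt x y ((1) - k * (1)) ((1 * k) - k * (0))) = A (pt x y (1 + -1 * k) (1 * k))" by (rule Peq[where A=A]) (simp_all add: algebra_simps)
  have e19: "A (pt x y ((1) + (1)) ((1 * k) + (0))) = A (pt x y (2) (1 * k))" by (rule Peq[where A=A]) (simp_all add: algebra_simps)
  have e20: "A (pt x y ((1) - (1)) ((1 * k) - (0))) = A (pt x y (0) (1 * k))" by (rule Peq[where A=A]) (simp_all add: algebra_simps)
  have d4: "Dop scale k A (pt x y (1) (1 * k)) (pt x y (1) (0)) = A (pt x y (1 + 1 * k) (1 * k)) + A (pt x y (1 + -1 * k) (1 * k)) - scale (of_int (k^2)) (A (pt x y (2) (1 * k))) - scale (of_int (k^2)) (A (pt x y (0) (1 * k))) - scale (of_int (2 * (1 - k^2))) (A (pt x y (1) (1 * k)))" by (simp only: DopP e17 e18 e19 e20)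
  have e21: "A (pt x y ((2) + k * (0)) ((-1) + k * (1))) = A (pt x y (2) (-1 + 1 * k))" by (rule Peq[where A=A]) (simp_all add: algebra_simps)
  have e22: "A (pt x y ((2) - k * (0)) ((-1) - k * (1))) = A (pt x y (2) (-1 + -1 * k))" by (rule Peq[where A=A]) (simp_all add: algebra_simps)
  have e23: "A (pt x y ((2) + (0)) ((-1) + (1))) = A (pt x y (2) (0))" by (rule Peq[where A=A]) (simp_all add: algebra_simps)
  have e24: "A (pt x y ((2) - (0)) ((-1) - (1))) = A (pt x y (2) (-2))" by (rule Peq[where A=A]) (simp_all add: algebra_simps)
  have d5: "Dop scale k A (pt x y (2) (-1)) (pt x y (0) (1)) = A (pt x y (2) (-1 + 1 * k)) + A (pt x y (2) (-1 + -1 * k)) - scale (of_int (k^2)) (A (pt x y (2) (0))) - scale (of_int (k^2)) (A (pt x y (2) (-2))) - scale (of_int (2 * (1 - k^2))) (A (pt x y (2) (-1)))" by (simp only: DopP e21 e22 e23 e24)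
  have e25: "A (pt x y ((2) + k * (0)) ((-1 * k) + k * (1))) = A (pt x y (2) (0))" by (rule Peq[where A=A]) (simp_all add: algebra_simps)
  have e26: "A (pt x y ((2) - k * (0)) ((-1 * k) - k * (1))) = A (pt x y (2) (-2 * k))" by (rule Peq[where A=A]) (simp_all add: algebra_simps)
  have e27: "A (pt x y ((2) + (0)) ((-1 * k) + (1))) = A (pt x y (2) (1 + -1 * k))" by (rule Peq[where A=A]) (simp_all add: algebra_simps)
  have e28: "A (pt x y ((2) - (0)) ((-1 * k) - (1))) = A (pt x y (2) (-1 + -1 * k))" by (rule Peq[where A=A]) (simp_all add: algebra_simps)
  have d6: "Dop scale k A (pt x y (2) (-1 * k)) (pt x y (0) (1)) = A (pt x y (2) (0)) + A (pt x y (2) (-2 * k)) - scale (of_int (k^2)) (A (pt x y (2) (1 + -1 * k))) - scale (of_int (k^2)) (A (pt x y (2) (-1 + -1 * k))) - scale (of_int (2 * (1 - k^2))) (A (pt x y (2) (-1 * k)))" by (simp only: DopP e25 e26 e27 e28)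
  have e29: "A (pt x y ((2) + k * (0)) ((0) + k * (1))) = A (pt x y (2) (1 * k))" by (rule Peq[where A=A]) (simp_all add: algebra_simps)
  have e30: "A (pt x y ((2) - k * (0)) ((0) - k * (1))) = A (pt x y (2) (-1 * k))" by (rule Peq[where A=A]) (simp_all add: algebra_simps)
  have e31: "A (pt x y ((2) + (0)) ((0) + (1))) = A (pt x y (2) (1))" by (rule Peq[where A=A]) (simp_all add: algebra_simps)
  have e32: "A (pt x y ((2) - (0)) ((0) - (1))) = A (pt x y (2) (-1))" by (rule Peq[where A=A]) (simp_all add: algebra_simps)
  have d7: "Dop scale k A (pt x y (2) (0)) (pt x y (0) (1)) = A (pt x y (2) (1 * k)) + A (pt x y (2) (-1 * k)) - scale (of_int (k^2)) (A (pt x y (2) (1))) - scale (of_int (k^2)) (A (pt x y (2) (-1))) - scale (of_int (2 * (1 - k^2))) (A (pt x y (2) (0)))" by (simp only: DopP e29 e30 e31 e32)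
  have e33: "A (pt x y ((2) + k * (0)) ((1 * k) + k * (1))) = A (pt x y (2) (2 * k))" by (rule Peq[where A=A]) (simp_all add: algebra_simps)
  have e34: "A (pt x y ((2) - k * (0)) ((1 * k) - k * (1))) = A (pt x y (2) (0))" by (rule Peq[where A=A]) (simp_all add: algebra_simps)
  have e35: "A (pt x y ((2) + (0)) ((1 * k) + (1))) = A (pt x y (2) (1 + 1 * k))" by (rule Peq[where A=A]) (simp_all add: algebra_simps)
  have e36: "A (pt x y ((2) - (0)) ((1 * k) - (1))) = A (pt x y (2) (-1 + 1 * k))" by (rule Peq[where A=A]) (simp_all add: algebra_simps)
  have d8: "Dop scale k A (pt x y (2) (1 * k)) (pt x y (0) (1)) = A (pt x y (2) (2 * k)) + A (pt x y (2) (0)) - scale (of_int (k^2)) (A (pt x y (2) (1 + 1 * k))) - scale (of_int (k^2)) (A (pt x y (2) (-1 + 1 * k))) - scale (of_int (2 * (1 - k^2))) (A (pt x y (2) (1 * k)))" by (simp only: DopP e33 e34 e35 e36)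
  have e37: "A (pt x y ((2) + k * (0)) ((1) + k * (1))) = A (pt x y (2) (1 + 1 * k))" by (rule Peq[where A=A]) (simp_all add: algebra_simps)
  have e38: "A (pt x y ((2) - k * (0)) ((1) - k * (1))) = A (pt x y (2) (1 + -1 * k))" by (rule Peq[where A=A]) (simp_all add: algebra_simps)
  have e39: "A (pt x y ((2) + (0)) ((1) + (1))) = A (pt x y (2) (2))" by (rule Peq[where A=A]) (simp_all add: algebra_simps)
  have e40: "A (pt x y ((2) - (0)) ((1) - (1))) = A (pt x y (2) (0))" by (rule Peq[where A=A]) (simp_all add: algebra_simps)
  have d9: "Dop scale k A (pt x y (2) (1)) (pt x y (0) (1)) = A (pt x y (2) (1 + 1 * k)) + A (pt x y (2) (1 + -1 * k)) - scale (of_int (k^2)) (A (pt x y (2) (2))) - scale (of_int (k^2)) (A (pt x y (2) (0))) - scale (of_int (2 * (1 - k^2))) (A (pt x y (2) (1)))" by (simp only: DopP e37 e38 e39 e40)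
  define w where "w = (\<lambda>j. ([A (pt x y (1 + 1 * k) (-1 * k)), A (pt x y (1 + -1 * k) (-1 * k)), A (pt x y (2) (-1 * k)), A (pt x y (0) (1 * k)), A (pt x y (1) (-1 * k)), A (pt x y (1) (1 * k)), A (pt x y (1) (1)), A (pt x y (1) (-1)), A (pt x y (1) (0)), A (pt x y (1 + 1 * k) (1 * k)), A (pt x y (2) (1)), A (pt x y (0) (1)), A (pt x y (1 + -1 * k) (1 * k)), A (pt x y (2) (-1)), A (pt x y (2) (1 * k)), A (pt x y (2) (-1 + 1 * k)), A (pt x y (2) (-1 + -1 * k)), A (pt x y (2) (0)), A (pt x y (2) (-2)), A (pt x y (2) (-2 * k)), A (pt x y (2) (1 + -1 * k)), A (pt x y (2) (2 * k)), A (pt x y (2) (1 + 1 * k)), A (pt x y (2) (2))]) ! j)"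
  have at0: "A (pt x y (1 + 1 * k) (-1 * k)) = lc scale w 24 (\<lambda>i. if i = 0 then 1 else 0)" by (simp add: lc_atom[symmetric] w_def)
  have at1: "A (pt x y (1 + -1 * k) (-1 * k)) = lc scale w 24 (\<lambda>i. if i = 1 then 1 else 0)" by (simp add: lc_atom[symmetric] w_def)
  have at2: "A (pt x y (2) (-1 * k)) = lc scale w 24 (\<lambda>i. if i = 2 then 1 else 0)" by (simp add: lc_atom[symmetric] w_def)
  have at3: "A (pt x y (0) (1 * k)) = lc scale w 24 (\<lambda>i. if i = 3 then 1 else 0)" by (simp add: lc_atom[symmetric] w_def)
  have at4: "A (pt x y (1) (-1 * k)) = lc scale w 24 (\<lambda>i. if i = 4 then 1 else 0)" by (simp add: lc_atom[symmetric] w_def)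
  have at5: "A (pt x y (1) (1 * k)) = lc scale w 24 (\<lambda>i. if i = 5 then 1 else 0)" by (simp add: lc_atom[symmetric] w_def)
  have at6: "A (pt x y (1) (1)) = lc scale w 24 (\<lambda>i. if i = 6 then 1 else 0)" by (simp add: lc_atom[symmetric] w_def)
  have at7: "A (pt x y (1) (-1)) = lc scale w 24 (\<lambda>i. if i = 7 then 1 else 0)" by (simp add: lc_atom[symmetric] w_def)
  have at8: "A (pt x y (1) (0)) = lc scale w 24 (\<lambda>i. if i = 8 then 1 else 0)" by (simp add: lc_atom[symmetric] w_def)
  have at9: "A (pt x y (1 + 1 * k) (1 * k)) = lc scale w 24 (\<lambda>i. if i = 9 then 1 else 0)" by (simp add: lc_atom[symmetric] w_def)
  have at10: "A (pt x y (2) (1)) = lc scale w 24 (\<lambda>i. if i = 10 then 1 else 0)" by (simp add: lc_atom[symmetric] w_def)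
  have at11: "A (pt x y (0) (1)) = lc scale w 24 (\<lambda>i. if i = 11 then 1 else 0)" by (simp add: lc_atom[symmetric] w_def)
  have at12: "A (pt x y (1 + -1 * k) (1 * k)) = lc scale w 24 (\<lambda>i. if i = 12 then 1 else 0)" by (simp add: lc_atom[symmetric] w_def)
  have at13: "A (pt x y (2) (-1)) = lc scale w 24 (\<lambda>i. if i = 13 then 1 else 0)" by (simp add: lc_atom[symmetric] w_def)
  have at14: "A (pt x y (2) (1 * k)) = lc scale w 24 (\<lambda>i. if i = 14 then 1 else 0)" by (simp add: lc_atom[symmetric] w_def)
  have at15: "A (pt x y (2) (-1 + 1 * k)) = lc scale w 24 (\<lambda>i. if i = 15 then 1 else 0)" by (simp add: lc_atom[symmetric] w_def)
  have at16: "A (pt x y (2) (-1 + -1 * k)) = lc scale w 24 (\<lambda>i. if i = 16 then 1 else 0)" by (simp add: lc_atom[symmetric] w_def)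
  have at17: "A (pt x y (2) (0)) = lc scale w 24 (\<lambda>i. if i = 17 then 1 else 0)" by (simp add: lc_atom[symmetric] w_def)
  have at18: "A (pt x y (2) (-2)) = lc scale w 24 (\<lambda>i. if i = 18 then 1 else 0)" by (simp add: lc_atom[symmetric] w_def)
  have at19: "A (pt x y (2) (-2 * k)) = lc scale w 24 (\<lambda>i. if i = 19 then 1 else 0)" by (simp add: lc_atom[symmetric] w_def)
  have at20: "A (pt x y (2) (1 + -1 * k)) = lc scale w 24 (\<lambda>i. if i = 20 then 1 else 0)" by (simp add: lc_atom[symmetric] w_def)
  have at21: "A (pt x y (2) (2 * k)) = lc scale w 24 (\<lambda>i. if i = 21 then 1 else 0)" by (simp add: lc_atom[symmetric] w_def)
  have at22: "A (pt x y (2) (1 + 1 * k)) = lc scale w 24 (\<lambda>i. if i = 22 then 1 else 0)" by (simp add: lc_atom[symmetric] w_def)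
  have at23: "A (pt x y (2) (2)) = lc scale w 24 (\<lambda>i. if i = 23 then 1 else 0)" by (simp add: lc_atom[symmetric] w_def)
  show ?thesis
    unfolding d0 d1 d2 d3 d4 d5 d6 d7 d8 d9
    unfolding at0 at1 at2 at3 at4 at5 at6 at7 at8 at9 at10 at11 at12 at13 at14 at15 at16 at17 at18 at19 at20 at21 at22 at23
    apply (simp only: scale_zero_right diff_0_right add_0_right diff_0 add_0)?
    apply (simp only: lc_add lc_diff lc_minus lc_scale)
    apply (rule lc_cong)
    apply (drule less_cases_24)
    apply (elim disjE; hypsubst; simp; algebra)
    done
qed

end



locale NA = vector_space smul for smul :: "'k::field \<Rightarrow> 'x::ab_group_add \<Rightarrow> 'x" +
  fixes v :: "'k \<Rightarrow> real" and nrm :: "'x \<Rightarrow> real"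
  assumes val: "nonarch_valuation v" and nrmA: "nonarch_norm v smul nrm"
    and compl: "norm_complete nrm" and two_nz: "(2::'k) \<noteq> 0"
begin

lemma v_nonneg: "0 \<le> v r" using val by (simp add: nonarch_valuation_def)
lemma v_zero_iff[simp]: "v r = 0 \<longleftrightarrow> r = 0" using val by (simp add: nonarch_valuation_def)
lemma v_mult: "v (r * s) = v r * v s" using val by (simp add: nonarch_valuation_def)
lemma v_ultra: "v (r + s) \<le> max (v r) (v s)" using val by (simp add: nonarch_valuation_def)
lemma v_zero[simp]: "v 0 = 0" by simp
lemma v_pos: "r \<noteq> 0 \<Longrightarrow> 0 < v r" using v_nonneg[of r] v_zero_iff[of r] by linarith
lemma v_one[simp]: "v 1 = 1"
proof -
  have "v 1 = v 1 * v 1" using v_mult[of 1 1] by simp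
  moreover have "v 1 \<noteq> 0" by simp
  ultimately show ?thesis by (metis mult_cancel_left2)
qed
lemma v_minus_one[simp]: "v (-1) = 1"
proof -
  have "v (-1) * v (-1) = 1" using v_mult[of "-1" "-1"] by simp
  then have "(v (-1) - 1) * (v (-1) + 1) = 0" by (simp add: algebra_simps)
  then show ?thesis using v_nonneg[of "-1"] by auto
qed
lemma v_minus[simp]: "v (- r) = v r"
  using v_mult[of "-1" r] by simp
lemma v_power: "v (r ^ n) = v r ^ n"
  by (induction n) (simp_all add: v_mult)
lemma v_inverse: "v (inverse r) = inverse (v r)"
proof (cases "r = 0")
  case False
  have "v r * v (inverse r) = 1" using v_mult[of r "inverse r"] False by (simp del: v_zero_iff)
  then show ?thesis by (metis inverse_unique)
qed simp
lemma v_of_nat_le: "v (of_nat n) \<le> 1"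
proof (induction n)
  case (Suc n)
  have "v (of_nat (Suc n)) = v (of_nat n + 1)" by (simp add: add.commute)
  also have "\<dots> \<le> max (v (of_nat n)) (v 1)" by (rule v_ultra)
  finally show ?case using Suc by simp
qed simp
lemma v_of_int_le: "v (of_int n) \<le> 1"
proof (cases "0 \<le> n")
  case True then show ?thesis using v_of_nat_le[of "nat n"] by simp
next
  case False
  then have "of_int n = - (of_nat (nat (- n)) :: 'k)" by simp
  then show ?thesis using v_of_nat_le[of "nat (-n)"] by simp
qed
lemma v_numeral_le: "v (numeral n) \<le> 1" using v_of_nat_le[of "numeral n"] by simp
lemma v2_pos: "0 < v 2" using two_nz by (rule v_pos)
lemma v2_le: "v 2 \<le> 1" by (rule v_numeral_le)
lemma v_pow2_pos: "0 < v ((2::'k) ^ n)" using two_nz by (intro v_pos) simp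

lemma nrm_zero_iff[simp]: "nrm z = 0 \<longleftrightarrow> z = 0" using nrmA by (simp add: nonarch_norm_def)
lemma nrm_smul: "nrm (smul r z) = v r * nrm z" using nrmA by (simp add: nonarch_norm_def)
lemma nrm_ultra: "nrm (a + b) \<le> max (nrm a) (nrm b)" using nrmA by (simp add: nonarch_norm_def)
lemma nrm_minus[simp]: "nrm (- a) = nrm a"
  using nrm_smul[of "-1" a] by simp
lemma nrm_zero0[simp]: "nrm 0 = 0" by simp
lemma nrm_nonneg: "0 \<le> nrm a"
proof -
  have "nrm (a + - a) \<le> max (nrm a) (nrm (- a))" by (rule nrm_ultra)
  then show ?thesis by simp
qed
lemma nrm_commute: "nrm (a - b) = nrm (b - a)"
  using nrm_minus[of "a - b"] by simp
lemma nrm_add_le: "nrm a \<le> B \<Longrightarrow> nrm b \<le> B \<Longrightarrow> nrm (a + b) \<le> B"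
  using nrm_ultra[of a b] by linarith
lemma nrm_diff_le: "nrm a \<le> B \<Longrightarrow> nrm b \<le> B \<Longrightarrow> nrm (a - b) \<le> B"
  using nrm_add_le[of a B "- b"] by simp
lemma nrm_tri: "nrm (a - c) \<le> max (nrm (a - b)) (nrm (b - c))"
  using nrm_ultra[of "a - b" "b - c"] by simp
lemma nrm_add_lt: "nrm a < B \<Longrightarrow> nrm b < B \<Longrightarrow> nrm (a + b) < B"
  using nrm_ultra[of a b] by linarith
lemma nrm_smul_int_le: "nrm (smul (of_int m) z) \<le> nrm z"
  using v_of_int_le[of m] nrm_nonneg[of z] v_nonneg[of "of_int m"] by (simp add: nrm_smul mult_left_le_one_le)

lemma two_smul: "smul 2 (z::'x) = z + z"
  using scale_left_distrib[of 1 1 z] by (simp add: one_add_one)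
lemma half_cancel: "(z::'x) + z = 0 \<Longrightarrow> z = 0"
proof -
  assume "z + z = 0"
  then have "smul 2 z = 0" by (simp add: two_smul)
  then show "z = 0" using two_nz by simp
qed

lemma lim_unique:
  assumes "(\<lambda>n. nrm (s n - a)) \<longlonglongrightarrow> 0" "(\<lambda>n. nrm (s n - b)) \<longlonglongrightarrow> 0"
  shows "a = b"
proof -
  have le: "nrm (a - b) \<le> max (nrm (s n - a)) (nrm (s n - b))" for n
    using nrm_tri[where a=a and b="s n" and c=b] nrm_commute[of a "s n"] by simp
  have "(\<lambda>n. max (nrm (s n - a)) (nrm (s n - b))) \<longlonglongrightarrow> max 0 0"
    by (intro tendsto_max assms)
  then have "nrm (a - b) \<le> 0"
    using le by (intro LIMSEQ_le_const[where X="\<lambda>n. max (nrm (s n - a)) (nrm (s n - b))"]) auto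
  then show ?thesis using nrm_nonneg[of "a - b"] by simp
qed

lemma le_of_lim:
  fixes c L :: real
  assumes "\<And>n. c \<le> max (a n) (b n)" "a \<longlonglongrightarrow> 0" "b \<longlonglongrightarrow> L" "0 \<le> L"
  shows "c \<le> L"
proof -
  have "(\<lambda>n. max (a n) (b n)) \<longlonglongrightarrow> max 0 L" by (rule tendsto_max[OF assms(2) assms(3)])
  then show ?thesis using assms(1,4) by (intro LIMSEQ_le_const[where X="\<lambda>n. max (a n) (b n)"]) auto
qed

lemma ultra_cauchy:
  fixes s :: "nat \<Rightarrow> 'x"
  assumes "\<forall>i\<ge>N. nrm (s (Suc i) - s i) < e" "0 < e" "N \<le> n"
  shows "nrm (s (n + d) - s n) < e"
proof (induction d)
  case 0 then show ?case using assms by simp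
next
  case (Suc d)
  have "s (n + Suc d) - s n = (s (Suc (n + d)) - s (n + d)) + (s (n + d) - s n)" by simp
  moreover have "nrm (s (Suc (n + d)) - s (n + d)) < e" using assms by simp
  ultimately show ?case using Suc nrm_add_lt by metis
qed

lemma cauchy_conv:
  fixes s :: "nat \<Rightarrow> 'x"
  assumes "(\<lambda>i. nrm (s (Suc i) - s i)) \<longlonglongrightarrow> 0"
  shows "\<exists>l. (\<lambda>n. nrm (s n - l)) \<longlonglongrightarrow> 0"
proof -
  have "\<forall>e>0. \<exists>N. \<forall>m\<ge>N. \<forall>n\<ge>N. nrm (s m - s n) < e"
  proof (intro allI impI)
    fix e :: real assume e: "0 < e"
    from LIMSEQ_D[OF assms e] obtain N where N: "\<forall>i\<ge>N. nrm (s (Suc i) - s i) < e"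
      using nrm_nonneg by auto
    have "\<forall>m\<ge>N. \<forall>n\<ge>N. nrm (s m - s n) < e"
    proof (intro allI impI)
      fix m n assume m: "N \<le> m" and n: "N \<le> n"
      show "nrm (s m - s n) < e"
      proof (cases "n \<le> m")
        case True
        then show ?thesis using ultra_cauchy[OF N e n, of "m - n"] by simp
      next
        case False
        then show ?thesis using ultra_cauchy[OF N e m, of "n - m"] nrm_commute by simp
      qed
    qed
    then show "\<exists>N. \<forall>m\<ge>N. \<forall>n\<ge>N. nrm (s m - s n) < e" by blast
  qed
  then show ?thesis using compl by (simp add: norm_complete_def)
qed

end



locale PR = NA smul v nrm for smul :: "'k::field \<Rightarrow> 'x::ab_group_add \<Rightarrow> 'x" and v nrm +
  fixes k :: int and \<phi> :: "'g::ab_group_add \<Rightarrow> 'g \<Rightarrow> real" and f :: "'g \<Rightarrow> 'x"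
  assumes k_nz: "(of_int (k^2 * (k^2 - 1)) :: 'k) \<noteq> 0"
    and phi_nonneg: "\<forall>x y. 0 \<le> \<phi> x y"
    and lim1: "\<forall>x y. (\<lambda>n. (1 / v ((2::'k) ^ n)) *
                 max (\<phi> (gmul (2 ^ (n + 1)) x) (gmul (2 ^ (n + 1)) y))
                     (v (8::'k) * \<phi> (gmul (2 ^ n) x) (gmul (2 ^ n) y))) \<longlonglongrightarrow> 0"
    and lim2: "\<forall>x. (\<lambda>n. (1 / v ((2::'k) ^ n * of_int (k^2 * (k^2 - 1)))) *
                 Phi v k \<phi> (gmul (2 ^ (n - 1)) x)) \<longlonglongrightarrow> 0"
    and conv: "\<forall>x. convergent (\<lambda>n. Max (Phi_term v k \<phi> x ` {..<n}))"
    and odd: "\<forall>x. f (- x) = - f x"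
    and ineq: "\<forall>x y. nrm (Dop smul k f x y) \<le> \<phi> x y"
begin

abbreviation "kk \<equiv> (of_int (k^2 * (k^2 - 1)) :: 'k)"

lemma vkk_pos: "0 < v kk" using k_nz by (rule v_pos)

lemma f0: "f 0 = 0"
proof -
  have "f 0 = - f 0" using odd[rule_format, of 0] by simp
  then have "f 0 + f 0 = 0" by (metis add.left_inverse)
  then show ?thesis by (rule half_cancel)
qed

definition g :: "'g \<Rightarrow> 'x" where "g x = f (gmul 2 x) - smul 8 (f x)"

lemma Phi_nonneg: "0 \<le> Phi v k \<phi> u"
proof -
  have "\<phi> u u \<le> Phi v k \<phi> u" unfolding Phi_def by (rule Max_ge) auto
  then show ?thesis using phi_nonneg by (meson order_trans)
qed

lemma tb: "v c \<le> w \<Longrightarrow> nrm d \<le> p \<Longrightarrow> 0 \<le> w \<Longrightarrow> w * p \<le> P \<Longrightarrow> nrm (smul c d) \<le> P"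
proof -
  assume a: "v c \<le> w" "nrm d \<le> p" "0 \<le> w" "w * p \<le> P"
  have "v c * nrm d \<le> w * p" using a v_nonneg nrm_nonneg by (intro mult_mono) auto
  then show ?thesis using a by (simp add: nrm_smul)
qed

lemma key1: "nrm (g (gmul 2 u) - smul 2 (g u)) \<le> Phi v k \<phi> u / v kk"
proof -
  let ?D = "\<lambda>a b. Dop smul k f (pt u u a 0) (pt u u b 0)"
  have id: "smul kk (smul (of_int (1)) (f (pt u u (4) (0))) + smul (of_int (-10)) (f (pt u u (2) (0))) + smul (of_int (16)) (f (pt u u (1) (0)))) =
    smul (of_int (4*k^2-3)) (?D 1 1)
    + smul (of_int (2*k^2)) (?D 1 2)
    + smul (of_int (-2*k^2)) (?D 2 1)
    + smul (of_int (-(k^2))) (?D 2 2)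
    + smul (of_int (-2)) (?D (1 + 1 * k) 1)
    + smul (of_int (2)) (?D (-1 + 1 * k) 1)
    + smul (of_int (1)) (?D 1 3)
    + smul (of_int (-1)) (?D (1 + 2 * k) 1)
    + smul (of_int (1)) (?D (-1 + 2 * k) 1)"
    by (rule id1d[where A=f and x=u and y=u]) (use odd f0 in auto)
  have ptu: "pt u u a 0 = gmul a u" for a by (simp add: pt_def)
  have lhs: "g (gmul 2 u) - smul 2 (g u) = smul (of_int (1)) (f (pt u u (4) (0))) + smul (of_int (-10)) (f (pt u u (2) (0))) + smul (of_int (16)) (f (pt u u (1) (0)))"
  proof -
    have g4: "gmul 2 (gmul 2 u) = gmul 4 u" by (simp add: gmul_mult[symmetric])
    have "g (gmul 2 u) - smul 2 (g u) = f (gmul 4 u) - smul 8 (f (gmul 2 u)) - (smul 2 (f (gmul 2 u)) - smul 16 (f u))"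
      by (simp add: g_def g4 scale_right_diff_distrib)
    also have "\<dots> = f (gmul 4 u) - (smul 8 (f (gmul 2 u)) + smul 2 (f (gmul 2 u))) + smul 16 (f u)"
      by (simp add: algebra_simps)
    also have "\<dots> = f (gmul 4 u) + smul (-10) (f (gmul 2 u)) + smul 16 (f u)"
      by (simp add: scale_left_distrib[symmetric] scale_minus_left)
    finally show ?thesis by (simp add: ptu)
  qed
  let ?P = "Phi v k \<phi> u"
  let ?K2 = "v (of_int (k^2) :: 'k)"
  have K2: "0 \<le> ?K2" by (rule v_nonneg)
  have pn: "0 \<le> \<phi> a b" for a b using phi_nonneg by auto
  have Dle: "nrm (?D a b) \<le> \<phi> (gmul a u) (gmul b u)" for a b using ineq by (simp add: ptu)
  have Pge: "x \<in> {v (of_int (2 * (k^2 - 1))) * \<phi> u u,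
       v (of_int (k^2)) * \<phi> (gmul 2 u) u,
       \<phi> u (gmul 2 u),
       \<phi> (gmul (k + 1) u) u,
       \<phi> (gmul (k - 1) u) u,
       \<phi> u u,
       v (of_int (k^2)) * \<phi> (gmul 2 u) (gmul 2 u),
       v (of_int (2 * (k^2 - 1))) * \<phi> u (gmul 2 u),
       \<phi> u (gmul 3 u),
       \<phi> (gmul (2 * k + 1) u) u,
       \<phi> (gmul (2 * k - 1) u) u } \<Longrightarrow> x \<le> ?P" for x
    unfolding Phi_def by (rule Max_ge) auto
  have t1: "nrm (smul (of_int (4*k^2-3)) (?D 1 1)) \<le> ?P"
    by (rule tb[OF v_of_int_le Dle]) (auto intro: Pge)
  have t2: "nrm (smul (of_int (2*k^2)) (?D 1 2)) \<le> ?P"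
    by (rule tb[OF v_of_int_le Dle]) (auto intro: Pge)
  have t3: "nrm (smul (of_int (-2*k^2)) (?D 2 1)) \<le> ?P"
  proof (rule tb[OF _ Dle K2])
    have "v (of_int (-2*k^2) :: 'k) = v 2 * ?K2" by (simp add: v_mult[symmetric])
    also have "\<dots> \<le> ?K2" using mult_left_le_one_le[OF K2 v_nonneg[of 2] v2_le] by simp
    finally show "v (of_int (-2*k^2) :: 'k) \<le> ?K2" .
    show "?K2 * \<phi> (gmul 2 u) (gmul 1 u) \<le> ?P" by (auto intro: Pge)
  qed
  have t4: "nrm (smul (of_int (-(k^2))) (?D 2 2)) \<le> ?P"
    by (rule tb[OF _ Dle K2]) (auto intro: Pge)
  have t5: "nrm (smul (of_int (-2)) (?D (1 + 1 * k) 1)) \<le> ?P"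
    by (rule tb[OF v_of_int_le Dle]) (auto intro!: Pge simp: add.commute)
  have t6: "nrm (smul (of_int 2) (?D (-1 + 1 * k) 1)) \<le> ?P"
    by (rule tb[OF v_of_int_le Dle]) (auto intro!: Pge simp: add.commute)
  have t7: "nrm (smul (of_int 1) (?D 1 3)) \<le> ?P"
    by (rule tb[OF v_of_int_le Dle]) (auto intro: Pge)
  have t8: "nrm (smul (of_int (-1)) (?D (1 + 2 * k) 1)) \<le> ?P"
    by (rule tb[OF v_of_int_le Dle]) (auto intro!: Pge simp: add.commute)
  have t9: "nrm (smul (of_int 1) (?D (-1 + 2 * k) 1)) \<le> ?P"
    by (rule tb[OF v_of_int_le Dle]) (auto intro!: Pge simp: add.commute)
  have "nrm (smul kk (g (gmul 2 u) - smul 2 (g u))) \<le> ?P"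
    unfolding lhs id
    by (intro nrm_add_le t1 t2 t3 t4 t5 t6 t7 t8 t9)
  then have "v kk * nrm (g (gmul 2 u) - smul 2 (g u)) \<le> ?P" by (simp add: nrm_smul)
  then show ?thesis using vkk_pos by (simp add: field_simps)
qed

end



context PR begin

definition h :: "nat \<Rightarrow> 'g \<Rightarrow> 'x" where
  "h n x = smul (inverse ((2::'k) ^ n)) (g (gmul (2 ^ n) x))"

lemma h0: "h 0 x = g x" by (simp add: h_def)

lemma h_succ_diff:
  "h (Suc n) x - h n x = smul (inverse ((2::'k) ^ Suc n)) (g (gmul 2 (gmul (2 ^ n) x)) - smul 2 (g (gmul (2 ^ n) x)))"
proof -
  have gm: "gmul (2 ^ Suc n) x = gmul 2 (gmul (2 ^ n) x)" by (simp add: gmul_mult[symmetric])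
  have inv: "inverse ((2::'k) ^ n) = inverse (2 ^ Suc n) * 2" using two_nz by (simp add: field_simps)
  show ?thesis unfolding h_def gm inv by (simp add: scale_right_diff_distrib)
qed

lemma Phi_term_Suc: "Phi_term v k \<phi> x (Suc n) = Phi v k \<phi> (gmul (2 ^ n) x) / v ((2::'k) ^ Suc n)"
  by (simp add: Phi_term_def)

lemma Phi_term_nonneg: "0 \<le> Phi_term v k \<phi> x i"
  unfolding Phi_term_def using Phi_nonneg v_nonneg by (simp add: divide_nonneg_nonneg)

lemma h_diff_le: "nrm (h (Suc n) x - h n x) \<le> Phi_term v k \<phi> x (Suc n) / v kk"
proof -
  have "nrm (h (Suc n) x - h n x) = v (inverse ((2::'k) ^ Suc n)) * nrm (g (gmul 2 (gmul (2 ^ n) x)) - smul 2 (g (gmul (2 ^ n) x)))"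
    by (simp add: h_succ_diff nrm_smul)
  also have "\<dots> \<le> v (inverse ((2::'k) ^ Suc n)) * (Phi v k \<phi> (gmul (2 ^ n) x) / v kk)"
    by (rule mult_left_mono[OF key1 v_nonneg])
  also have "\<dots> = Phi_term v k \<phi> x (Suc n) / v kk"
    unfolding v_inverse Phi_term_Suc by (simp add: divide_inverse mult_ac)
  finally show ?thesis .
qed

lemma Phi_term_lim: "(\<lambda>n. Phi_term v k \<phi> x (Suc n) / v kk) \<longlonglongrightarrow> 0"
proof -
  have "(\<lambda>n. (1 / v ((2::'k) ^ (Suc n) * kk)) * Phi v k \<phi> (gmul (2 ^ (Suc n - 1)) x)) \<longlonglongrightarrow> 0"
    using LIMSEQ_Suc[OF lim2[rule_format, of x]] .
  moreover have "(1 / v ((2::'k) ^ (Suc n) * kk)) * Phi v k \<phi> (gmul (2 ^ (Suc n - 1)) x) = Phi_term v k \<phi> x (Suc n) / v kk" for n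
    by (simp add: Phi_term_Suc v_mult)
  ultimately show ?thesis by simp
qed

lemma h_diff_lim: "(\<lambda>n. nrm (h (Suc n) x - h n x)) \<longlonglongrightarrow> 0"
proof (rule tendsto_sandwich[OF _ _ tendsto_const Phi_term_lim])
  show "\<forall>\<^sub>F n in sequentially. 0 \<le> nrm (h (Suc n) x - h n x)" by (simp add: nrm_nonneg)
  show "\<forall>\<^sub>F n in sequentially. nrm (h (Suc n) x - h n x) \<le> Phi_term v k \<phi> x (Suc n) / v kk"
    using h_diff_le by (intro always_eventually) auto
qed

definition Alim :: "'g \<Rightarrow> 'x" where
  "Alim x = (SOME l. (\<lambda>n. nrm (h n x - l)) \<longlonglongrightarrow> 0)"

lemma Alim: "(\<lambda>n. nrm (h n x - Alim x)) \<longlonglongrightarrow> 0"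
proof -
  have "\<exists>l. (\<lambda>n. nrm (h n x - l)) \<longlonglongrightarrow> 0" by (rule cauchy_conv[OF h_diff_lim])
  then show ?thesis unfolding Alim_def by (rule someI_ex)
qed

abbreviation "M x n \<equiv> Max (Phi_term v k \<phi> x ` {..<Suc n})"

lemma M_ge: "i \<le> n \<Longrightarrow> Phi_term v k \<phi> x i \<le> M x n"
  by (rule Max_ge) auto

lemma M_mono: "M x n \<le> M x (Suc n)"
  by (rule Max_mono) auto

lemma M_nonneg: "0 \<le> M x n"
  using M_ge[of 0 n x] Phi_term_nonneg[of x 0] by linarith

lemma h_g_le: "nrm (h n x - g x) \<le> M x n / v kk"
proof (induction n)
  case 0 then show ?case using M_nonneg[of x 0] vkk_pos by (simp add: h0)
next
  case (Suc n)
  have "h (Suc n) x - g x = (h (Suc n) x - h n x) + (h n x - g x)" by simp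
  moreover have "nrm (h (Suc n) x - h n x) \<le> M x (Suc n) / v kk"
    using h_diff_le[of n x] M_ge[of "Suc n" "Suc n" x] vkk_pos
    by (meson divide_right_mono less_imp_le order_trans order_refl)
  moreover have "nrm (h n x - g x) \<le> M x (Suc n) / v kk"
    using Suc M_mono[of x n] vkk_pos by (meson divide_right_mono less_imp_le order_trans)
  ultimately show ?case by (metis nrm_add_le)
qed

lemma bound_main:
  "nrm (g x - Alim x) \<le> (1 / v (of_int (2 * k^2 * (k^2 - 1)))) * lim (\<lambda>n. Max (Phi_term v k \<phi> x ` {..<n}))"
proof -
  define L where "L = lim (\<lambda>n. Max (Phi_term v k \<phi> x ` {..<n}))"
  have cL: "(\<lambda>n. Max (Phi_term v k \<phi> x ` {..<n})) \<longlonglongrightarrow> L"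
    using conv unfolding L_def by (simp add: convergent_LIMSEQ_iff)
  have hML: "(\<lambda>n. M x n) \<longlonglongrightarrow> L" using LIMSEQ_Suc[OF cL] .
  have L0: "0 \<le> L" using hML M_nonneg by (intro LIMSEQ_le_const[where X="\<lambda>n. M x n"]) auto
  have le: "nrm (g x - Alim x) \<le> max (nrm (h n x - Alim x)) (M x n / v kk)" for n
  proof -
    have "nrm (g x - Alim x) \<le> max (nrm (g x - h n x)) (nrm (h n x - Alim x))" by (rule nrm_tri)
    moreover have "nrm (g x - h n x) \<le> M x n / v kk" using h_g_le nrm_commute by metis
    ultimately show ?thesis by linarith
  qed
  have "nrm (g x - Alim x) \<le> L / v kk"
    apply (rule le_of_lim[OF le Alim tendsto_divide[OF hML tendsto_const]])
    subgoal using vkk_pos by linarith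
    using L0 vkk_pos by simp
  also have "\<dots> \<le> (1 / v (of_int (2 * k^2 * (k^2 - 1)))) * L"
  proof -
    have "(of_int (2 * k^2 * (k^2 - 1)) :: 'k) = 2 * kk" by simp
    then have e: "v (of_int (2 * k^2 * (k^2 - 1)) :: 'k) = v 2 * v kk" by (simp add: v_mult)
    have "v 2 * v kk \<le> v kk" using mult_left_le_one_le[OF less_imp_le[OF vkk_pos] v_nonneg[of 2] v2_le] .
    then have "1 / v kk \<le> 1 / (v 2 * v kk)" using vkk_pos v2_pos by (intro divide_left_mono) auto
    then have "(1 / v kk) * L \<le> (1 / (v 2 * v kk)) * L" using L0 by (rule mult_right_mono)
    then show ?thesis unfolding e by simp
  qed
  finally show ?thesis unfolding L_def .
qed

end



lemma three_dvd: "(3::int) dvd k^2 * (k^2 - 1)"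
proof -
  have e: "k^2 * (k^2 - 1) = k * ((k - 1) * k * (k + 1))" by algebra
  have "k mod 3 = 0 \<or> k mod 3 = 1 \<or> k mod 3 = 2" by arith
  then have "3 dvd (k - 1) \<or> 3 dvd k \<or> 3 dvd (k + 1)" by presburger
  then have "3 dvd (k - 1) * k * (k + 1)" by auto
  then show ?thesis unfolding e by simp
qed

context PR begin

lemma g_odd: "g (- x) = - g x"
  using odd by (simp add: g_def gmul_minus_right scale_right_diff_distrib[symmetric])

lemma h_odd: "h n (- x) = - h n x"
  by (simp add: h_def gmul_minus_right g_odd)

lemma A_odd: "Alim (- x) = - Alim x"
proof (rule lim_unique[where s="\<lambda>n. h n (- x)"])
  show "(\<lambda>n. nrm (h n (- x) - Alim (- x))) \<longlonglongrightarrow> 0" by (rule Alim)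
  have "nrm (h n (- x) - - Alim x) = nrm (h n x - Alim x)" for n
    using nrm_minus[of "h n x - Alim x"] by (simp add: h_odd)
  then show "(\<lambda>n. nrm (h n (- x) - - Alim x)) \<longlonglongrightarrow> 0" using Alim[of x] by simp
qed

lemma A0: "Alim 0 = 0"
proof -
  have "Alim 0 = - Alim 0" using A_odd[of 0] by simp
  then have "Alim 0 + Alim 0 = 0" by (metis add.left_inverse)
  then show ?thesis by (rule half_cancel)
qed

lemma h_double: "h n (gmul 2 x) = smul 2 (h (Suc n) x)"
proof -
  have gm: "gmul (2 ^ n) (gmul 2 x) = gmul (2 ^ Suc n) x" by (simp add: gmul_mult[symmetric] mult.commute)
  have inv: "inverse ((2::'k) ^ n) = 2 * inverse (2 ^ Suc n)" using two_nz by (simp add: field_simps)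
  show ?thesis unfolding h_def gm inv by simp
qed

lemma A2: "Alim (gmul 2 x) = smul 2 (Alim x)"
proof (rule lim_unique[where s="\<lambda>n. h n (gmul 2 x)"])
  show "(\<lambda>n. nrm (h n (gmul 2 x) - Alim (gmul 2 x))) \<longlonglongrightarrow> 0" by (rule Alim)
  have le: "nrm (h n (gmul 2 x) - smul 2 (Alim x)) \<le> nrm (h (Suc n) x - Alim x)" for n
  proof -
    have "nrm (h n (gmul 2 x) - smul 2 (Alim x)) = v 2 * nrm (h (Suc n) x - Alim x)"
      by (simp add: h_double scale_right_diff_distrib[symmetric] nrm_smul)
    also have "\<dots> \<le> nrm (h (Suc n) x - Alim x)"
      using mult_left_le_one_le[OF nrm_nonneg v_nonneg[of 2] v2_le] .
    finally show ?thesis .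
  qed
  show "(\<lambda>n. nrm (h n (gmul 2 x) - smul 2 (Alim x))) \<longlonglongrightarrow> 0"
    by (rule tendsto_sandwich[OF _ _ tendsto_const LIMSEQ_Suc[OF Alim[of x]]])
       (use le nrm_nonneg in auto)
qed

lemma Dop_diff: "Dop smul k F p q - Dop smul k G p q = Dop smul k (\<lambda>z. F z - G z) p q"
  by (simp add: Dop_def scale_right_diff_distrib algebra_simps)

lemma Dop_scale: "Dop smul k (\<lambda>z. smul c (G z)) p q = smul c (Dop smul k G p q)"
  by (simp add: Dop_def scale_right_diff_distrib scale_right_distrib mult.commute)

lemma Dop_comp: "Dop smul k (\<lambda>z. G (gmul m z)) p q = Dop smul k G (gmul m p) (gmul m q)"
proof -
  have c: "gmul m (gmul k q) = gmul k (gmul m q)" by (simp add: gmul_mult[symmetric] mult.commute)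
  show ?thesis by (simp add: Dop_def gmul_add_right gmul_diff_right c)
qed

lemma Dop_le: "nrm (Dop smul k G p q) \<le> max (max (nrm (G (p + gmul k q))) (nrm (G (p - gmul k q))))
     (max (max (nrm (G (p + q))) (nrm (G (p - q)))) (nrm (G p)))"
  (is "_ \<le> ?B")
  unfolding Dop_def
  by (intro nrm_diff_le nrm_add_le order_trans[OF nrm_smul_int_le]) auto

lemma Dg: "Dop smul k g P Q = Dop smul k f (gmul 2 P) (gmul 2 Q) - smul 8 (Dop smul k f P Q)"
proof -
  have "g = (\<lambda>z. f (gmul 2 z) - smul 8 (f z))" by (simp add: g_def fun_eq_iff)
  then have "Dop smul k g P Q = Dop smul k (\<lambda>z. f (gmul 2 z)) P Q - Dop smul k (\<lambda>z. smul 8 (f z)) P Q"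
    by (simp add: Dop_diff)
  then show ?thesis by (simp add: Dop_comp Dop_scale)
qed

lemma Dg_le: "nrm (Dop smul k g P Q) \<le> max (\<phi> (gmul 2 P) (gmul 2 Q)) (v 8 * \<phi> P Q)"
proof -
  have "nrm (smul 8 (Dop smul k f P Q)) \<le> v 8 * \<phi> P Q"
    using ineq v_nonneg by (simp add: nrm_smul mult_left_mono)
  then show ?thesis unfolding Dg using ineq by (intro nrm_diff_le) (auto intro: le_max_iff_disj[THEN iffD2])
qed

lemma Dh: "Dop smul k (h n) p q = smul (inverse ((2::'k) ^ n)) (Dop smul k g (gmul (2 ^ n) p) (gmul (2 ^ n) q))"
proof -
  have "h n = (\<lambda>z. smul (inverse ((2::'k) ^ n)) ((\<lambda>w. g (gmul (2 ^ n) w)) z))" by (simp add: h_def fun_eq_iff)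
  then show ?thesis by (simp add: Dop_scale Dop_comp)
qed

lemma Dh_le: "nrm (Dop smul k (h n) p q) \<le> (1 / v ((2::'k) ^ n)) *
                 max (\<phi> (gmul (2 ^ (n + 1)) p) (gmul (2 ^ (n + 1)) q))
                     (v (8::'k) * \<phi> (gmul (2 ^ n) p) (gmul (2 ^ n) q))"
proof -
  have gm: "gmul 2 (gmul (2 ^ n) z) = gmul (2 ^ (n + 1)) z" for z by (simp add: gmul_mult[symmetric])
  have "nrm (Dop smul k (h n) p q) = v (inverse ((2::'k) ^ n)) * nrm (Dop smul k g (gmul (2 ^ n) p) (gmul (2 ^ n) q))"
    by (simp add: Dh nrm_smul)
  also have "\<dots> \<le> v (inverse ((2::'k) ^ n)) * max (\<phi> (gmul 2 (gmul (2 ^ n) p)) (gmul 2 (gmul (2 ^ n) q))) (v 8 * \<phi> (gmul (2 ^ n) p) (gmul (2 ^ n) q))"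
    by (rule mult_left_mono[OF Dg_le v_nonneg])
  finally show ?thesis by (simp add: gm v_inverse divide_inverse)
qed

lemma DA0: "Dop smul k Alim p q = 0"
proof -
  let ?a = "\<lambda>n. nrm (Dop smul k Alim p q - Dop smul k (h n) p q)"
  let ?b = "\<lambda>n. nrm (Dop smul k (h n) p q)"
  have le: "nrm (Dop smul k Alim p q) \<le> max (?a n) (?b n)" for n
    using nrm_ultra[of "Dop smul k Alim p q - Dop smul k (h n) p q" "Dop smul k (h n) p q"] by simp
  have t: "\<And>z. (\<lambda>n. nrm (Alim z - h n z)) \<longlonglongrightarrow> 0"
    using Alim nrm_commute by simp
  have a0: "?a \<longlonglongrightarrow> 0"
  proof (rule tendsto_sandwich[OF _ _ tendsto_const])
    show "\<forall>\<^sub>F n in sequentially. 0 \<le> ?a n" by (simp add: nrm_nonneg)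
    show "\<forall>\<^sub>F n in sequentially. ?a n \<le> max (max (nrm (Alim (p + gmul k q) - h n (p + gmul k q))) (nrm (Alim (p - gmul k q) - h n (p - gmul k q))))
     (max (max (nrm (Alim (p + q) - h n (p + q))) (nrm (Alim (p - q) - h n (p - q)))) (nrm (Alim p - h n p)))"
      apply (intro always_eventually allI)
      subgoal for n using Dop_le[of "\<lambda>z. Alim z - h n z" p q] by (simp add: Dop_diff)
      done
    show "(\<lambda>n. max (max (nrm (Alim (p + gmul k q) - h n (p + gmul k q))) (nrm (Alim (p - gmul k q) - h n (p - gmul k q))))
     (max (max (nrm (Alim (p + q) - h n (p + q))) (nrm (Alim (p - q) - h n (p - q)))) (nrm (Alim p - h n p)))) \<longlonglongrightarrow> 0"
      using tendsto_max[OF tendsto_max[OF t t] tendsto_max[OF tendsto_max[OF t t] t]] by simp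
  qed
  have b0: "?b \<longlonglongrightarrow> 0"
    apply (rule tendsto_sandwich[OF _ _ tendsto_const lim1[rule_format, of p q]])
     apply (simp add: nrm_nonneg)
    apply (intro always_eventually allI)
    apply (rule Dh_le)
    done
  have "nrm (Dop smul k Alim p q) \<le> 0" by (rule le_of_lim[OF le a0 b0]) simp
  then show ?thesis using nrm_nonneg[of "Dop smul k Alim p q"] by simp
qed

lemma L0: "a' = 2 * a \<Longrightarrow> b' = 2 * b \<Longrightarrow> Alim (pt x y a' b') - smul (of_int 2) (Alim (pt x y a b)) = 0"
proof -
  assume "a' = 2 * a" "b' = 2 * b"
  then have "pt x y a' b' = gmul 2 (pt x y a b)" by (simp add: pt_gmul)
  then show ?thesis by (simp add: A2)
qed

lemma six_nz: "(of_int (6 * k^2 * (k^2 - 1)) :: 'k) \<noteq> 0"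
proof -
  obtain m where m: "k^2 * (k^2 - 1) = 3 * m" using three_dvd by (auto elim: dvdE)
  have kk3: "kk = 3 * of_int m" unfolding m by simp
  have three: "(3::'k) \<noteq> 0" using k_nz kk3 by auto
  have eq: "(of_int (6 * k^2 * (k^2 - 1)) :: 'k) = 2 * (3 * kk)"
    by (simp add: mult.assoc)
  show ?thesis unfolding eq using two_nz three k_nz by (metis mult_eq_0_iff)
qed

lemma jensen: "Alim (x + y) + Alim (x - y) = Alim x + Alim x"
proof -
  note id = id2d[where A=Alim and x=x and y=y and k=k, OF allI[OF A_odd] A0]
  have l1: "Alim (pt x y (2) (-2)) - smul (of_int 2) (Alim (pt x y (1) (-1))) = 0" by (rule L0) simp_all
  have l2: "Alim (pt x y (2) (-2 * k)) - smul (of_int 2) (Alim (pt x y (1) (-1 * k))) = 0" by (rule L0) simp_all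
  have l3: "Alim (pt x y (2) (0)) - smul (of_int 2) (Alim (pt x y (1) (0))) = 0" by (rule L0) simp_all
  have l4: "Alim (pt x y (2) (2 * k)) - smul (of_int 2) (Alim (pt x y (1) (1 * k))) = 0" by (rule L0) simp_all
  have l5: "Alim (pt x y (2) (2)) - smul (of_int 2) (Alim (pt x y (1) (1))) = 0" by (rule L0) simp_all
  have "smul (of_int (6 * k^2 * (k^2 - 1))) (smul (of_int 1) (Alim (pt x y 1 1)) + smul (of_int 1) (Alim (pt x y 1 (-1))) + smul (of_int (-2)) (Alim (pt x y 1 0))) = 0"
    using id by (simp only: DA0 l1 l2 l3 l4 l5 scale_zero_right add_0_right)
  then have "smul (of_int 1) (Alim (pt x y 1 1)) + smul (of_int 1) (Alim (pt x y 1 (-1))) + smul (of_int (-2)) (Alim (pt x y 1 0)) = 0"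
    using six_nz by simp
  moreover have "pt x y 1 1 = x + y" "pt x y 1 (-1) = x - y" "pt x y 1 0 = x"
    by (simp_all add: pt_def gmul_minus)
  ultimately have "Alim (x + y) + Alim (x - y) - smul 2 (Alim x) = 0"
    by (simp add: scale_minus_left)
  then show ?thesis by (simp add: two_smul)
qed

lemma A_add: "additive_map Alim"
  unfolding additive_map_def
proof (intro allI)
  fix x y
  have j1: "Alim (x + y) + Alim (x - y) = Alim x + Alim x" by (rule jensen)
  have j2: "Alim (y + x) + Alim (y - x) = Alim y + Alim y" by (rule jensen)
  have "Alim (y - x) = - Alim (x - y)" using A_odd[of "x - y"] by simp
  then have "(Alim (x + y) - Alim x - Alim y) + (Alim (x + y) - Alim x - Alim y) = 0"
    using j1 j2 by (simp add: algebra_simps)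
  then show "Alim (x + y) = Alim x + Alim y" by (metis half_cancel diff_diff_eq eq_iff_diff_eq_0)
qed

end



context PR begin

lemma add_pow2:
  assumes "additive_map B"
  shows "B (gmul (2 ^ n) x) = smul ((2::'k) ^ n) (B x)"
proof (induction n)
  case 0 then show ?case by simp
next
  case (Suc n)
  have d: "B (gmul 2 w) = smul 2 (B w)" for w
  proof -
    have "gmul 2 w = w + w" using gmul_add[of 1 1 w] by simp
    then show ?thesis using assms by (simp add: additive_map_def two_smul)
  qed
  have "gmul (2 ^ Suc n) x = gmul 2 (gmul (2 ^ n) x)" by (simp add: gmul_mult[symmetric])
  then show ?case using Suc d by simp
qed

lemma incseq_M: "incseq (\<lambda>n. M x n)"
  by (rule incseq_SucI) (rule M_mono)

lemma M_lim: "(\<lambda>n. M x n) \<longlonglongrightarrow> lim (\<lambda>n. Max (Phi_term v k \<phi> x ` {..<n}))"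
proof -
  have "(\<lambda>n. Max (Phi_term v k \<phi> x ` {..<n})) \<longlonglongrightarrow> lim (\<lambda>n. Max (Phi_term v k \<phi> x ` {..<n}))"
    using conv by (simp add: convergent_LIMSEQ_iff)
  then show ?thesis by (rule LIMSEQ_Suc)
qed

lemma M_le_L: "M x n \<le> lim (\<lambda>n. Max (Phi_term v k \<phi> x ` {..<n}))"
  by (rule incseq_le[OF incseq_M M_lim])

definition S :: "'g \<Rightarrow> nat \<Rightarrow> nat \<Rightarrow> real" where
  "S x i m = Max (Phi_term v k \<phi> x ` {i..<m + i})"

lemma S_conv: "(\<lambda>m. S x i m) \<longlonglongrightarrow> lim (\<lambda>m. S x i m)"
proof -
  have inc: "incseq (\<lambda>m. S x i (Suc m))"
    by (rule incseq_SucI) (unfold S_def, rule Max_mono, auto)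
  have bd: "S x i (Suc m) \<le> lim (\<lambda>n. Max (Phi_term v k \<phi> x ` {..<n}))" for m
  proof -
    have "S x i (Suc m) \<le> M x (m + i)" unfolding S_def by (rule Max_mono) auto
    then show ?thesis using M_le_L[of x "m + i"] by linarith
  qed
  obtain L where "(\<lambda>m. S x i (Suc m)) \<longlonglongrightarrow> L" using incseq_convergent[OF inc] bd by blast
  then have "(\<lambda>m. S x i m) \<longlonglongrightarrow> L" by (rule LIMSEQ_imp_Suc)
  then have "convergent (\<lambda>m. S x i m)" by (auto simp: convergent_def)
  then show ?thesis by (simp add: convergent_LIMSEQ_iff)
qed

lemma Phi_term_shift:
  "Phi_term v k \<phi> (gmul (2 ^ n) x) i \<le> v ((2::'k) ^ n) * Phi_term v k \<phi> x (if i = 0 then n + 1 else i + n)"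
proof (cases "i = 0")
  case True
  have "Phi_term v k \<phi> (gmul (2 ^ n) x) i = Phi v k \<phi> (gmul (2 ^ n) x)" using True by (simp add: Phi_term_def)
  also have "\<dots> \<le> Phi v k \<phi> (gmul (2 ^ n) x) / v 2"
    using Phi_nonneg v2_pos mult_right_le_one_le[OF Phi_nonneg less_imp_le[OF v2_pos] v2_le] by (simp add: le_divide_eq)
  also have "\<dots> = v ((2::'k) ^ n) * Phi_term v k \<phi> x (n + 1)"
    using v_pow2_pos[of n] by (simp add: Phi_term_def v_mult field_simps)
  finally show ?thesis using True by simp
next
  case False
  then obtain j where j: "i = Suc j" by (cases i) auto
  have gm: "gmul (2 ^ j) (gmul (2 ^ n) x) = gmul (2 ^ (j + n)) x" by (simp add: gmul_mult[symmetric] power_add)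
  have "Phi_term v k \<phi> (gmul (2 ^ n) x) i = v ((2::'k) ^ n) * Phi_term v k \<phi> x (i + n)"
    using v_pow2_pos[of n] v_pow2_pos[of i] unfolding j
    by (simp add: Phi_term_def gm v_mult power_add field_simps)
  then show ?thesis using False by simp
qed

lemma Lz_le: "lim (\<lambda>m. Max (Phi_term v k \<phi> (gmul (2 ^ n) x) ` {..<m})) \<le> v ((2::'k) ^ n) * lim (\<lambda>m. S x n m)"
proof (rule LIMSEQ_le)
  show "(\<lambda>m. Max (Phi_term v k \<phi> (gmul (2 ^ n) x) ` {..<m})) \<longlonglongrightarrow> lim (\<lambda>m. Max (Phi_term v k \<phi> (gmul (2 ^ n) x) ` {..<m}))"
    using conv by (simp add: convergent_LIMSEQ_iff)
  show "(\<lambda>m. v ((2::'k) ^ n) * S x n m) \<longlonglongrightarrow> v ((2::'k) ^ n) * lim (\<lambda>m. S x n m)"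
    by (intro tendsto_mult tendsto_const S_conv)
  show "\<exists>N. \<forall>m\<ge>N. Max (Phi_term v k \<phi> (gmul (2 ^ n) x) ` {..<m}) \<le> v ((2::'k) ^ n) * S x n m"
  proof (intro exI allI impI)
    fix m :: nat assume m: "2 \<le> m"
    show "Max (Phi_term v k \<phi> (gmul (2 ^ n) x) ` {..<m}) \<le> v ((2::'k) ^ n) * S x n m"
    proof -
      have fin: "finite (Phi_term v k \<phi> (gmul (2 ^ n) x) ` {..<m})" by simp
      have ne: "Phi_term v k \<phi> (gmul (2 ^ n) x) ` {..<m} \<noteq> {}" using m by (auto simp: lessThan_empty_iff)
      show ?thesis unfolding Max_le_iff[OF fin ne]
      proof
      fix t assume "t \<in> Phi_term v k \<phi> (gmul (2 ^ n) x) ` {..<m}"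
      then obtain i where i: "i < m" "t = Phi_term v k \<phi> (gmul (2 ^ n) x) i" by auto
      let ?j = "if i = 0 then n + 1 else i + n"
      have jin: "?j \<in> {n..<m + n}" using i m by auto
      have "Phi_term v k \<phi> x ?j \<le> S x n m" unfolding S_def using jin by (intro Max_ge) auto
      then have "v ((2::'k) ^ n) * Phi_term v k \<phi> x ?j \<le> v ((2::'k) ^ n) * S x n m"
        by (rule mult_left_mono) (rule v_nonneg)
      then show "t \<le> v ((2::'k) ^ n) * S x n m" using i Phi_term_shift[of n x i] by linarith
    qed
    qed
  qed
qed

lemma unique:
  assumes hyp: "\<forall>x. (\<lambda>i. lim (\<lambda>n. Max (Phi_term v k \<phi> x ` {i..<n + i}))) \<longlonglongrightarrow> 0"
    and add': "additive_map A'"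
    and bd': "\<forall>x. nrm (f (gmul 2 x) - smul 8 (f x) - A' x)
                 \<le> (1 / v (of_int (2 * k^2 * (k^2 - 1)))) * lim (\<lambda>n. Max (Phi_term v k \<phi> x ` {..<n}))"
  shows "A' = Alim"
proof
  fix x
  let ?C = "1 / v (of_int (2 * k^2 * (k^2 - 1)) :: 'k)"
  have C0: "0 \<le> ?C" using v_nonneg by simp
  let ?T = "\<lambda>n. lim (\<lambda>m. S x n m)"
  have le: "nrm (Alim x - A' x) \<le> ?C * ?T n" for n
  proof -
    let ?z = "gmul (2 ^ n) x"
    let ?Lz = "lim (\<lambda>m. Max (Phi_term v k \<phi> ?z ` {..<m}))"
    have e: "Alim x - A' x = smul (inverse ((2::'k) ^ n)) (Alim ?z - A' ?z)"
      using two_nz by (simp add: add_pow2[OF A_add] add_pow2[OF add'] scale_right_diff_distrib[symmetric])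
    have b1: "nrm (g ?z - Alim ?z) \<le> ?C * ?Lz" by (rule bound_main)
    have b2: "nrm (g ?z - A' ?z) \<le> ?C * ?Lz" using bd' by (simp add: g_def)
    have "nrm (Alim ?z - A' ?z) \<le> max (nrm (Alim ?z - g ?z)) (nrm (g ?z - A' ?z))" by (rule nrm_tri)
    then have z: "nrm (Alim ?z - A' ?z) \<le> ?C * ?Lz" using b1 b2 nrm_commute[of "Alim ?z" "g ?z"] by linarith
    have "nrm (Alim x - A' x) = inverse (v ((2::'k) ^ n)) * nrm (Alim ?z - A' ?z)"
      unfolding e by (simp add: nrm_smul v_inverse)
    also have "\<dots> \<le> inverse (v ((2::'k) ^ n)) * (?C * ?Lz)"
      by (rule mult_left_mono[OF z]) (simp add: v_nonneg)
    also have "\<dots> \<le> inverse (v ((2::'k) ^ n)) * (?C * (v ((2::'k) ^ n) * ?T n))"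
      using Lz_le[of n x] C0 v_pow2_pos[of n] by (intro mult_left_mono) auto
    also have "\<dots> = ?C * ?T n" using v_pow2_pos[of n] by (simp add: field_simps)
    finally show ?thesis .
  qed
  have T0: "?T \<longlonglongrightarrow> 0" using hyp[rule_format, of x] by (simp add: S_def)
  have "nrm (Alim x - A' x) \<le> ?C * 0"
    by (rule LIMSEQ_le_const[OF tendsto_mult[OF tendsto_const T0]]) (use le in auto)
  then have "nrm (Alim x - A' x) \<le> 0" by simp
  then show "A' x = Alim x" using nrm_nonneg[of "Alim x - A' x"] by simp
qed

end


theorem theorem2p2:
  fixes v :: "'k::field \<Rightarrow> real"
    and smul :: "'k \<Rightarrow> 'x::ab_group_add \<Rightarrow> 'x"
    and nrm :: "'x \<Rightarrow> real"
    and k :: int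
    and \<phi> :: "'g::ab_group_add \<Rightarrow> 'g \<Rightarrow> real"
    and f :: "'g \<Rightarrow> 'x"
  assumes val: "nonarch_valuation v" and nontriv: "nontrivial_valuation v"
    and vs: "vector_space smul"
    and nrm: "nonarch_norm v smul nrm"
    and compl: "norm_complete nrm"
    and k: "k \<noteq> 0" "k \<noteq> 1" "k \<noteq> -1"
    and two_nz: "(2::'k) \<noteq> 0"
    and k_nz: "(of_int (k^2 * (k^2 - 1)) :: 'k) \<noteq> 0"
    and phi_nonneg: "\<forall>x y. 0 \<le> \<phi> x y"
    and lim1: "\<forall>x y. (\<lambda>n. (1 / v ((2::'k) ^ n)) *
                 max (\<phi> (gmul (2 ^ (n + 1)) x) (gmul (2 ^ (n + 1)) y))
                     (v (8::'k) * \<phi> (gmul (2 ^ n) x) (gmul (2 ^ n) y))) \<longlonglongrightarrow> 0"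
    and lim2: "\<forall>x. (\<lambda>n. (1 / v ((2::'k) ^ n * of_int (k^2 * (k^2 - 1)))) *
                 Phi v k \<phi> (gmul (2 ^ (n - 1)) x)) \<longlonglongrightarrow> 0"
    and conv: "\<forall>x. convergent (\<lambda>n. Max (Phi_term v k \<phi> x ` {..<n}))"
    and odd: "\<forall>x. f (- x) = - f x"
    and ineq: "\<forall>x y. nrm (Dop smul k f x y) \<le> \<phi> x y"
  shows "\<exists>A. additive_map A \<and>
           (\<forall>x. nrm (f (gmul 2 x) - smul 8 (f x) - A x)
                 \<le> (1 / v (of_int (2 * k^2 * (k^2 - 1)))) *
                   lim (\<lambda>n. Max (Phi_term v k \<phi> x ` {..<n}))) \<and>
           ((\<forall>x. (\<lambda>i. lim (\<lambda>n. Max (Phi_term v k \<phi> x ` {i..<n + i}))) \<longlonglongrightarrow> 0) \<longrightarrow>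
              (\<forall>A'. additive_map A' \<and>
                 (\<forall>x. nrm (f (gmul 2 x) - smul 8 (f x) - A' x)
                       \<le> (1 / v (of_int (2 * k^2 * (k^2 - 1)))) *
                         lim (\<lambda>n. Max (Phi_term v k \<phi> x ` {..<n}))) \<longrightarrow> A' = A))"
  proof -
  have "PR smul v nrm k \<phi> f"
    unfolding PR_def PR_axioms_def NA_def NA_axioms_def using assms by auto
  then interpret PR smul v nrm k \<phi> f .
  show ?thesis
    apply (rule exI[of _ Alim])
    apply (intro conjI impI allI)
    subgoal by (rule A_add)
    subgoal for x using bound_main[of x] unfolding g_def .
    subgoal for A' by (rule unique) blast+
    done
qed


end
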